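(* Let $D$ be an integral domain and let $p$ be a prime element of $D$ such that $\bigcap_{n=1}^\infty p^nD=0$. Let $R$ be a commutative ring with $D\subseteq R$ a (unital) ring extension such that $p$ is a unit of $R$. Then $R$ has a maximal subring $W$ which is integrally closed in $R$, contains $D$, and conches $\frac{1}{p}$ in $R$ (that is, $p\in W$, $\frac{1}{p}\notin W$, and $W$ is maximal among subrings of $R$ containing $p$ and not containing $\frac1p$).
   Context: All rings are commutative with $1\neq 0$ and all subrings and ring extensions are unital. A maximal subring of a ring $R$ is a proper subring of $R$ that is maximal with respect to inclusion among proper subrings of $R$. For a ring $T$ and a unit $x\in T$, a subring $V$ of $T$ is said to conch $x$ in $T$ (or to be an $x$-conch subring) if $x^{-1}\in V$, $x\notin V$, and $V$ is maximal with respect to inclusion among subrings of $T$ containing $x^{-1}$ but not $x$. *)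

theory Defs
  imports Main
begin

text \<open>The ambient ring R is the whole type 'a (a commutative ring with 1 \<noteq> 0).
  Subrings are unital subsets.\<close>

definition is_subring :: "'a::comm_ring_1 set \<Rightarrow> bool" where
  "is_subring S \<longleftrightarrow> 1 \<in> S \<and> (\<forall>x\<in>S. \<forall>y\<in>S. x + y \<in> S \<and> x * y \<in> S) \<and> (\<forall>x\<in>S. - x \<in> S)"

definition maximal_subring :: "'a::comm_ring_1 set \<Rightarrow> bool" where
  "maximal_subring W \<longleftrightarrow> is_subring W \<and> W \<noteq> UNIV \<and>
     (\<forall>S. is_subring S \<and> W \<subseteq> S \<and> S \<noteq> UNIV \<longrightarrow> S = W)"

definition integral_over :: "'a::comm_ring_1 set \<Rightarrow> 'a \<Rightarrow> bool" where
  "integral_over S x \<longleftrightarrow> (\<exists>n c. (\<forall>i<n. c i \<in> S) \<and> x ^ n + (\<Sum>i<n. c i * x ^ i) = 0)"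

definition integrally_closed_in :: "'a::comm_ring_1 set \<Rightarrow> bool" where
  "integrally_closed_in S \<longleftrightarrow> (\<forall>x. integral_over S x \<longrightarrow> x \<in> S)"

definition conches :: "'a::comm_ring_1 set \<Rightarrow> 'a \<Rightarrow> bool" where
  "conches V x \<longleftrightarrow> (\<exists>y. x * y = 1 \<and> is_subring V \<and> y \<in> V \<and> x \<notin> V \<and>
     (\<forall>S. is_subring S \<and> V \<subseteq> S \<and> y \<in> S \<and> x \<notin> S \<longrightarrow> S = V))"

definition integral_domain_subring :: "'a::comm_ring_1 set \<Rightarrow> bool" where
  "integral_domain_subring D \<longleftrightarrow> is_subring D \<and>
     (\<forall>a\<in>D. \<forall>b\<in>D. a * b = 0 \<longrightarrow> a = 0 \<or> b = 0)"

definition prime_in :: "'a::comm_ring_1 set \<Rightarrow> 'a \<Rightarrow> bool" where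
  "prime_in D p \<longleftrightarrow> p \<in> D \<and> p \<noteq> 0 \<and> \<not> (\<exists>u\<in>D. p * u = 1) \<and>
     (\<forall>a\<in>D. \<forall>b\<in>D. (\<exists>c\<in>D. a * b = p * c) \<longrightarrow> (\<exists>c\<in>D. a = p * c) \<or> (\<exists>c\<in>D. b = p * c))"

end

theory Submission
  imports Defs "Jordan_Normal_Form.Determinant"
begin


lemma zorn_above:
  assumes S0: "S0 \<in> F"
    and ch: "\<And>C. C \<subseteq> F \<Longrightarrow> chain\<^sub>\<subseteq> C \<Longrightarrow> C \<noteq> {} \<Longrightarrow> \<Union>C \<in> F"
  shows "\<exists>M\<in>F. S0 \<subseteq> M \<and> (\<forall>X\<in>F. M \<subseteq> X \<longrightarrow> X = M)"
proof -
  let ?F = "{X\<in>F. S0 \<subseteq> X}"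
  have "\<forall>C\<in>chains ?F. \<exists>U\<in>?F. \<forall>X\<in>C. X \<subseteq> U"
  proof
    fix C assume C: "C \<in> chains ?F"
    show "\<exists>U\<in>?F. \<forall>X\<in>C. X \<subseteq> U"
    proof (cases "C = {}")
      case True
      have "S0 \<in> ?F" using S0 by simp
      then show ?thesis using True by blast
    next
      case False
      have CF: "C \<subseteq> ?F" and chC: "chain\<^sub>\<subseteq> C" using C unfolding chains_def by simp_all
      have "C \<subseteq> F" using CF by blast
      then have "\<Union>C \<in> F" using ch chC False by blast
      moreover have "S0 \<subseteq> \<Union>C" using CF False by blast
      ultimately have "\<Union>C \<in> ?F" by simp
      then show ?thesis by blast
    qed
  qed
  from Zorn_Lemma2[OF this] obtain M where M1: "M \<in> ?F" and M2: "\<forall>X\<in>?F. M \<subseteq> X \<longrightarrow> X = M" 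
    by auto
  have "\<forall>X\<in>F. M \<subseteq> X \<longrightarrow> X = M"
  proof (intro ballI impI)
    fix X assume "X \<in> F" "M \<subseteq> X"
    then have "X \<in> ?F" using M1 by auto
    then show "X = M" using M2 \<open>M \<subseteq> X\<close> by blast
  qed
  then show ?thesis using M1 by blast
qed

lemma chain_two:
  assumes "chain\<^sub>\<subseteq> C" "a \<in> \<Union>C" "b \<in> \<Union>C"
  shows "\<exists>S\<in>C. a \<in> S \<and> b \<in> S"
proof -
  obtain S1 S2 where "S1 \<in> C" "S2 \<in> C" "a \<in> S1" "b \<in> S2" using assms by auto
  then show ?thesis using assms(1) unfolding chain_subset_def by blast
qed

section \<open>Subrings\<close>

lemma subring_1: "is_subring S \<Longrightarrow> 1 \<in> S" by (simp add: is_subring_def)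
lemma subring_add: "is_subring S \<Longrightarrow> a \<in> S \<Longrightarrow> b \<in> S \<Longrightarrow> a + b \<in> S" by (simp add: is_subring_def)
lemma subring_mult: "is_subring S \<Longrightarrow> a \<in> S \<Longrightarrow> b \<in> S \<Longrightarrow> a * b \<in> S" by (simp add: is_subring_def)
lemma subring_neg: "is_subring S \<Longrightarrow> a \<in> S \<Longrightarrow> - a \<in> S" by (simp add: is_subring_def)
lemma subring_0: "is_subring S \<Longrightarrow> 0 \<in> S"
  using subring_add[of S 1 "-1"] subring_1 subring_neg by fastforce
lemma subring_diff: "is_subring S \<Longrightarrow> a \<in> S \<Longrightarrow> b \<in> S \<Longrightarrow> a - b \<in> S"
  using subring_add subring_neg by (metis diff_conv_add_uminus)
lemma subring_pow: "is_subring S \<Longrightarrow> a \<in> S \<Longrightarrow> a ^ n \<in> S"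
  by (induction n) (auto intro: subring_1 subring_mult)
lemma subring_sum: "is_subring S \<Longrightarrow> (\<And>i. i \<in> F \<Longrightarrow> f i \<in> S) \<Longrightarrow> sum f F \<in> S"
proof (induction F rule: infinite_finite_induct)
  case (infinite A) then show ?case by (simp add: subring_0)
next
  case empty then show ?case by (simp add: subring_0)
next
  case (insert x F) then show ?case by (simp add: subring_add)
qed

lemma subring_poly: "is_subring S \<Longrightarrow> (\<forall>i. coeff g i \<in> S) \<Longrightarrow> x \<in> S \<Longrightarrow> poly g x \<in> S"
  by (simp add: poly_altdef subring_sum subring_mult subring_pow)

lemma subring_chain:
  assumes ne: "C \<noteq> {}" and ch: "chain\<^sub>\<subseteq> C" and sub: "\<forall>S\<in>C. is_subring S"
  shows "is_subring (\<Union>C)"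
  unfolding is_subring_def
proof (intro conjI ballI)
  obtain S where "S \<in> C" using ne by blast
  then show "1 \<in> \<Union>C" using sub subring_1 by blast
next
  fix x y assume "x \<in> \<Union>C" "y \<in> \<Union>C"
  then obtain S where S: "S \<in> C" "x \<in> S" "y \<in> S" using chain_two[OF ch] by blast
  have "is_subring S" using sub S(1) by blast
  then have "x + y \<in> S" "x * y \<in> S" using S subring_add subring_mult by blast+
  then show "x + y \<in> \<Union>C" "x * y \<in> \<Union>C" using S(1) by blast+
next
  fix x assume "x \<in> \<Union>C"
  then obtain S where S: "S \<in> C" "x \<in> S" by blast
  have "is_subring S" using sub S(1) by blast
  then have "- x \<in> S" using S subring_neg by blast
  then show "- x \<in> \<Union>C" using S(1) by blast
qed

definition adjoin :: "'a::comm_ring_1 set \<Rightarrow> 'a \<Rightarrow> 'a set" where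
  "adjoin S x = {poly g x | g. \<forall>i. coeff g i \<in> S}"

lemma coeff_mult_in: assumes "is_subring S" "\<forall>i. coeff f i \<in> S" "\<forall>i. coeff g i \<in> S"
  shows "\<forall>i. coeff (f * g) i \<in> S"
  using assms by (auto simp: coeff_mult intro!: subring_sum subring_mult)

lemma adjoin_subring: assumes S: "is_subring S" shows "is_subring (adjoin S x)"
proof -
  have "1 \<in> adjoin S x" unfolding adjoin_def
    by (rule CollectI, rule exI[of _ 1]) (auto simp: coeff_1 S subring_1 subring_0)
  moreover have "\<forall>a\<in>adjoin S x. \<forall>b\<in>adjoin S x. a + b \<in> adjoin S x \<and> a * b \<in> adjoin S x"
  proof (intro ballI)
    fix a b assume "a \<in> adjoin S x" "b \<in> adjoin S x"
    then obtain f g where f: "\<forall>i. coeff f i \<in> S" "a = poly f x" and g: "\<forall>i. coeff g i \<in> S" "b = poly g x"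
      unfolding adjoin_def by blast
    have "a + b = poly (f + g) x" "\<forall>i. coeff (f + g) i \<in> S" using f g S by (auto simp: subring_add)
    moreover have "a * b = poly (f * g) x" "\<forall>i. coeff (f * g) i \<in> S"
      using f g coeff_mult_in[OF S f(1) g(1)] by auto
    ultimately show "a + b \<in> adjoin S x \<and> a * b \<in> adjoin S x" unfolding adjoin_def by blast
  qed
  moreover have "\<forall>a\<in>adjoin S x. - a \<in> adjoin S x"
  proof
    fix a assume "a \<in> adjoin S x"
    then obtain f where f: "\<forall>i. coeff f i \<in> S" "a = poly f x" unfolding adjoin_def by blast
    have "- a = poly (- f) x" "\<forall>i. coeff (- f) i \<in> S" using f S by (auto simp: subring_neg)
    then show "- a \<in> adjoin S x" unfolding adjoin_def by blast
  qed
  ultimately show ?thesis unfolding is_subring_def by blast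
qed

lemma adjoin_base: assumes "is_subring S" "a \<in> S" shows "a \<in> adjoin S x"
proof -
  have "\<forall>i. coeff [:a:] i \<in> S" using assms by (auto simp: coeff_pCons split: nat.split intro: subring_0)
  then show ?thesis unfolding adjoin_def by (intro CollectI exI[of _ "[:a:]"]) auto
qed

lemma adjoin_gen: assumes "is_subring S" shows "x \<in> adjoin S x"
proof -
  have "\<forall>i. coeff [:0, 1:] i \<in> S" using assms
    by (auto simp: coeff_pCons split: nat.split intro: subring_0 subring_1)
  then show ?thesis unfolding adjoin_def by (intro CollectI exI[of _ "[:0, 1:]"]) auto
qed

lemma adjoin_sub: "is_subring S \<Longrightarrow> S \<subseteq> adjoin S x"
  using adjoin_base by blast

section \<open>Reduction modulo a monic relation\<close>

lemma monic_reduce: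
  fixes x :: "'a::comm_ring_1"
  assumes S: "is_subring S" and K: "K \<ge> 1" and c: "\<forall>i<K. c i \<in> S"
    and rel: "x ^ K + (\<Sum>i<K. c i * x ^ i) = 0"
    and t: "t \<in> adjoin S x"
  shows "\<exists>s. (\<forall>l<K. s l \<in> S) \<and> t = (\<Sum>l<K. s l * x ^ l)"
proof -
  define M where "M = {y. \<exists>s. (\<forall>l<K. s l \<in> S) \<and> y = (\<Sum>l<K. s l * x ^ l)}"
  have Madd: "a + b \<in> M" if ab: "a \<in> M" "b \<in> M" for a b
  proof -
    obtain s1 s2 where "\<forall>l<K. s1 l \<in> S" "a = (\<Sum>l<K. s1 l * x ^ l)" "\<forall>l<K. s2 l \<in> S" "b = (\<Sum>l<K. s2 l * x ^ l)"
      using ab unfolding M_def by blast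
    then show ?thesis unfolding M_def
      by (intro CollectI exI[of _ "\<lambda>l. s1 l + s2 l"]) (auto simp: S subring_add sum.distrib distrib_right)
  qed
  have Mconst: "a \<in> M" if "a \<in> S" for a
  proof -
    have "(\<Sum>l<K. (if l = 0 then a else 0) * x ^ l) = a"
      using K by (simp add: if_distrib[of "\<lambda>y. y * _"] sum.delta cong: if_cong)
    then show ?thesis unfolding M_def using that S subring_0
      by (intro CollectI exI[of _ "\<lambda>l. if l = 0 then a else 0"]) auto
  qed
  have Mx: "x * a \<in> M" if aM: "a \<in> M" for a
  proof -
    obtain s where s: "\<forall>l<K. s l \<in> S" "a = (\<Sum>l<K. s l * x ^ l)" using aM unfolding M_def by blast
    obtain K' where K': "K = Suc K'" using K by (cases K) auto
    have e1: "x * a = (\<Sum>l<K. s l * x ^ Suc l)" unfolding s(2) sum_distrib_left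
      by (intro sum.cong refl) (simp add: mult.commute mult.left_commute)
    have e2: "(\<Sum>l<K. s l * x ^ Suc l) = (\<Sum>l<K'. s l * x ^ Suc l) + s K' * x ^ K"
      unfolding K' by simp
    have e3: "(\<Sum>l<K'. s l * x ^ Suc l) = (\<Sum>l<K. (if l = 0 then 0 else s (l - 1)) * x ^ l)"
      unfolding K' sum.lessThan_Suc_shift by simp
    have e4: "s K' * x ^ K = (\<Sum>l<K. (- (s K' * c l)) * x ^ l)"
    proof -
      have xK: "x ^ K = - (\<Sum>i<K. c i * x ^ i)" using rel by (simp add: eq_neg_iff_add_eq_0)
      have "(\<Sum>l<K. (- (s K' * c l)) * x ^ l) = (\<Sum>l<K. - (s K' * (c l * x ^ l)))"
        by (simp only: mult_minus_left mult.assoc)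
      also have "\<dots> = - (\<Sum>l<K. s K' * (c l * x ^ l))" by (rule sum_negf)
      also have "\<dots> = s K' * x ^ K" unfolding xK sum_distrib_left[symmetric] by simp
      finally show ?thesis by simp
    qed
    have "x * a = (\<Sum>l<K. ((if l = 0 then 0 else s (l - 1)) + (- (s K' * c l))) * x ^ l)"
      by (simp only: e1 e2 e3 e4 distrib_right sum.distrib)
    then have xa: "x * a = (\<Sum>l<K. ((if l = 0 then 0 else s (l - 1)) - s K' * c l) * x ^ l)"
      by (simp only: diff_conv_add_uminus)
    have Sf:  "\<forall>l<K. (if l = 0 then 0 else s (l - 1)) - s K' * c l \<in> S"
      using s(1) c S K' by (auto intro!: subring_diff subring_mult subring_0 subring_neg)
    show ?thesis unfolding M_def using xa Sf by (intro CollectI exI[of _ "\<lambda>l. (if l = 0 then 0 else s (l - 1)) - s K' * c l"] conjI)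
  qed
  have "poly g x \<in> M" if "\<forall>i. coeff g i \<in> S" for g
    using that
  proof (induction g)
    case 0 then show ?case using Mconst[of 0] S subring_0 by simp
  next
    case (pCons a g)
    have "a \<in> S" using pCons.prems by (metis coeff_pCons_0)
    moreover have "\<forall>i. coeff g i \<in> S" using pCons.prems by (metis coeff_pCons_Suc)
    ultimately show ?case using pCons.IH Mconst Madd Mx by simp
  qed
  then show ?thesis using t unfolding adjoin_def M_def by blast
qed




lemma det_trick_zero:
  fixes e :: "'a::comm_ring_1" and m :: "nat \<Rightarrow> 'a" and E :: "nat \<Rightarrow> nat \<Rightarrow> 'a"
  assumes k: "k \<ge> 1" and m0: "m 0 = 1"
    and rel: "\<forall>j<k. e * m j = (\<Sum>l<k. E j l * m l)"
  shows "det (mat k k (\<lambda>(i,j). (if i = j then e else 0) - E i j)) = 0"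
proof -
  define M where "M = mat k k (\<lambda>(i,j). (if i = j then e else 0) - E i j)"
  define mv where "mv = vec k m"
  have Mc: "M \<in> carrier_mat k k" unfolding M_def by simp
  have mvc: "mv \<in> carrier_vec k" unfolding mv_def by simp
  have Mmv: "M *\<^sub>v mv = 0\<^sub>v k"
  proof (rule eq_vecI)
    show "dim_vec (M *\<^sub>v mv) = dim_vec (0\<^sub>v k)" using Mc by simp
    fix j assume "j < dim_vec (0\<^sub>v k)"
    hence j: "j < k" by simp
    have "(M *\<^sub>v mv) $ j = (\<Sum>l<k. ((if j = l then e else 0) - E j l) * m l)"
      using j unfolding M_def mv_def mult_mat_vec_def scalar_prod_def
      by (auto simp: lessThan_atLeast0 intro!: sum.cong)
    also have "\<dots> = (\<Sum>l<k. (if j = l then e else 0) * m l) - (\<Sum>l<k. E j l * m l)"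
      by (simp add: left_diff_distrib sum_subtractf)
    also have "(\<Sum>l<k. (if j = l then e else 0) * m l) = e * m j"
      using j by (simp add: sum.delta if_distrib[of "\<lambda>x. x * m _"] cong: if_cong)
    finally show "(M *\<^sub>v mv) $ j = 0\<^sub>v k $ j" using rel j by simp
  qed
  have "(adj_mat M * M) *\<^sub>v mv = adj_mat M *\<^sub>v (M *\<^sub>v mv)"
    by (rule assoc_mult_mat_vec[OF adj_mat(1)[OF Mc] Mc mvc])
  also have "\<dots> = 0\<^sub>v k" unfolding Mmv using adj_mat(1)[OF Mc]
    by (intro eq_vecI) (auto simp: mult_mat_vec_def scalar_prod_def)
  finally have "(det M \<cdot>\<^sub>m 1\<^sub>m k) *\<^sub>v mv = 0\<^sub>v k" using adj_mat[OF Mc] by simp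
  hence "((det M \<cdot>\<^sub>m 1\<^sub>m k) *\<^sub>v mv) $ 0 = 0" using k by simp
  moreover have "((det M \<cdot>\<^sub>m 1\<^sub>m k) *\<^sub>v mv) $ 0 = det M * m 0"
  proof -
    have "((det M \<cdot>\<^sub>m 1\<^sub>m k) *\<^sub>v mv) $ 0 = (\<Sum>l<k. (if 0 = l then det M else 0) * m l)"
      using k unfolding mv_def mult_mat_vec_def scalar_prod_def
      by (auto simp: lessThan_atLeast0 intro!: sum.cong)
    also have "\<dots> = det M * m 0" using k by (simp add: sum.delta if_distrib[of "\<lambda>x. x * m _"] cong: if_cong)
    finally show ?thesis .
  qed
  ultimately show ?thesis using m0 unfolding M_def by simp
qed




lemma GL:
  fixes e :: "'a::comm_ring_1" and m :: "nat \<Rightarrow> 'a" and E :: "nat \<Rightarrow> nat \<Rightarrow> 'a"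
    and I :: "nat \<Rightarrow> 'a set"
  assumes k: "k \<ge> 1" and m0: "m 0 = 1"
    and rel: "\<forall>j<k. e * m j = (\<Sum>l<k. E j l * m l)"
    and Ek: "\<forall>j<k. \<forall>l<k. E j l \<in> I 1"
    and I0: "\<And>n. 0 \<in> I n"
    and Iadd: "\<And>n a b. a \<in> I n \<Longrightarrow> b \<in> I n \<Longrightarrow> a + b \<in> I n"
    and Ineg: "\<And>n a. a \<in> I n \<Longrightarrow> - a \<in> I n"
    and Ie: "\<And>n a. a \<in> I n \<Longrightarrow> e * a \<in> I (Suc n)"
    and Imul: "\<And>n n' a b. a \<in> I n \<Longrightarrow> b \<in> I n' \<Longrightarrow> a * b \<in> I (n + n')"
  shows "e ^ k \<in> I k"
proof -
  define M where "M = mat k k (\<lambda>(i,j). (if i = j then e else 0) - E i j)"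
  have detM: "det M = 0" unfolding M_def by (rule det_trick_zero[OF k m0 rel])
  have Mc: "M \<in> carrier_mat k k" unfolding M_def by simp
  have epow: "\<And>j n b. b \<in> I n \<Longrightarrow> e ^ j * b \<in> I (n + j)"
  proof -
    fix j n b assume "b \<in> I n"
    then show "e ^ j * b \<in> I (n + j)"
      by (induction j) (auto simp: mult.assoc dest: Ie)
  qed
  have Isum: "\<And>F (g :: _ \<Rightarrow> 'a) n. finite F \<Longrightarrow> (\<forall>x\<in>F. g x \<in> I n) \<Longrightarrow> sum g F \<in> I n"
  proof -
    fix F and g :: "_ \<Rightarrow> 'a" and n assume "finite F" "\<forall>x\<in>F. g x \<in> I n"
    then show "sum g F \<in> I n" by (induction F rule: finite_induct) (auto intro: I0 Iadd)
  qed
  have Isub: "\<And>n a b. a \<in> I n \<Longrightarrow> b \<in> I n \<Longrightarrow> a - b \<in> I n"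
    using Iadd Ineg by (metis diff_conv_add_uminus)
  have prodI: "(\<Prod>i=0..<n. M $$ (i, \<sigma> i)) - (if \<forall>i<n. \<sigma> i = i then e ^ n else 0) \<in> I n"
    if sp: "\<sigma> permutes {0..<k}" and nk: "n \<le> k" for \<sigma> n
    using nk
  proof (induction n)
    case 0
    then show ?case using I0 by simp
  next
    case (Suc n)
    have nk: "n < k" using Suc.prems by simp
    have sn: "\<sigma> n < k" using sp nk by (simp add: permutes_in_image)
    define a where "a = (\<Prod>i=0..<n. M $$ (i, \<sigma> i)) - (if \<forall>i<n. \<sigma> i = i then e ^ n else 0)"
    have aI: "a \<in> I n" using Suc a_def by simp
    have EI: "E n (\<sigma> n) \<in> I 1" using Ek nk sn by simp
    have Mn: "M $$ (n, \<sigma> n) = (if n = \<sigma> n then e else 0) - E n (\<sigma> n)"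
      unfolding M_def using nk sn by simp
    have P: "(\<Prod>i=0..<Suc n. M $$ (i, \<sigma> i)) = (a + (if \<forall>i<n. \<sigma> i = i then e ^ n else 0)) * M $$ (n, \<sigma> n)"
      unfolding a_def by simp
    have aE: "a * E n (\<sigma> n) \<in> I (Suc n)" using Imul[OF aI EI] by simp
    have ae: "a * e \<in> I (Suc n)" using Ie[OF aI] by (simp add: mult.commute)
    have eE: "e ^ n * E n (\<sigma> n) \<in> I (Suc n)" using epow[OF EI, of n] by simp
    show ?case
    proof (cases "\<forall>i<n. \<sigma> i = i")
      case True
      show ?thesis
      proof (cases "\<sigma> n = n")
        case True2: True
        have all: "\<forall>i<Suc n. \<sigma> i = i" using True True2 less_Suc_eq by auto
        have "(\<Prod>i=0..<Suc n. M $$ (i, \<sigma> i)) - e ^ Suc n = a * e - e ^ n * E n (\<sigma> n) - a * E n (\<sigma> n)"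
          unfolding P Mn using True True2 by (simp add: algebra_simps)
        then show ?thesis using all aE ae eE Isub by auto
      next
        case False
        have nall: "\<not> (\<forall>i<Suc n. \<sigma> i = i)" using False by auto
        have "(\<Prod>i=0..<Suc n. M $$ (i, \<sigma> i)) = - (a * E n (\<sigma> n)) - e ^ n * E n (\<sigma> n)"
          unfolding P Mn using True False by (simp add: algebra_simps)
        then show ?thesis using nall aE eE Isub Ineg by auto
      qed
    next
      case False
      have nall: "\<not> (\<forall>i<Suc n. \<sigma> i = i)" using False by (meson less_SucI)
      have "(\<Prod>i=0..<Suc n. M $$ (i, \<sigma> i)) = a * ((if n = \<sigma> n then e else 0) - E n (\<sigma> n))"
        unfolding P Mn using False by (simp only: if_False add_0_right)
      also have "\<dots> = (if n = \<sigma> n then a * e else 0) - a * E n (\<sigma> n)"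
        by (cases "n = \<sigma> n") (simp_all add: right_diff_distrib)
      finally have "(\<Prod>i=0..<Suc n. M $$ (i, \<sigma> i)) = (if n = \<sigma> n then a * e else 0) - a * E n (\<sigma> n)" .
      then show ?thesis using nall aE ae Isub I0 by auto
    qed
  qed
  let ?S = "{\<sigma>. \<sigma> permutes {0..<k}}"
  have fin: "finite ?S" by (simp add: finite_permutations)
  have dM: "det M = (\<Sum>\<sigma>\<in>?S. signof \<sigma> * (\<Prod>i=0..<k. M $$ (i, \<sigma> i)))"
    using det_def'[OF Mc] by simp
  have c: "(\<Sum>\<sigma>\<in>?S. signof \<sigma> * (if \<forall>i<k. \<sigma> i = i then e ^ k else 0)) = e ^ k"
  proof -
    have "\<And>\<sigma>. \<sigma> \<in> ?S \<Longrightarrow> (\<forall>i<k. \<sigma> i = i) \<longleftrightarrow> \<sigma> = id"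
    proof -
      fix \<sigma> assume "\<sigma> \<in> ?S"
      hence sp: "\<sigma> permutes {0..<k}" by simp
      show "(\<forall>i<k. \<sigma> i = i) \<longleftrightarrow> \<sigma> = id"
      proof
        assume h: "\<forall>i<k. \<sigma> i = i"
        show "\<sigma> = id"
        proof
          fix x show "\<sigma> x = id x" using h permutes_not_in[OF sp, of x] by (cases "x < k") auto
        qed
      qed auto
    qed
    note iff = this
    have "(\<Sum>\<sigma>\<in>?S. signof \<sigma> * (if \<forall>i<k. \<sigma> i = i then e ^ k else 0))
        = (\<Sum>\<sigma>\<in>?S. if \<sigma> = id then signof \<sigma> * e ^ k else 0)"
    proof (rule sum.cong[OF refl])
      fix \<sigma> assume "\<sigma> \<in> ?S"
      then show "signof \<sigma> * (if \<forall>i<k. \<sigma> i = i then e ^ k else 0) = (if \<sigma> = id then signof \<sigma> * e ^ k else 0)"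
        using iff[of \<sigma>] by simp
    qed
    also have "\<dots> = signof id * e ^ k" using fin permutes_id[of "{0..<k}"] by (simp add: sum.delta')
    finally show ?thesis by simp
  qed
  have sgn: "\<And>\<sigma> x n. x \<in> I n \<Longrightarrow> signof \<sigma> * x \<in> I n"
  proof -
    fix \<sigma> x n assume "x \<in> I n"
    then show "signof \<sigma> * x \<in> I n" using Ineg by (cases "evenperm \<sigma>") (simp_all add: sign_def)
  qed
  have "det M - e ^ k = (\<Sum>\<sigma>\<in>?S. signof \<sigma> * ((\<Prod>i=0..<k. M $$ (i, \<sigma> i)) - (if \<forall>i<k. \<sigma> i = i then e ^ k else 0)))"
  proof -
    have "det M - e ^ k = (\<Sum>\<sigma>\<in>?S. signof \<sigma> * (\<Prod>i=0..<k. M $$ (i, \<sigma> i))) - (\<Sum>\<sigma>\<in>?S. signof \<sigma> * (if \<forall>i<k. \<sigma> i = i then e ^ k else 0))"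
      by (simp only: dM c)
    then show ?thesis by (simp only: sum_subtractf[symmetric] right_diff_distrib)
  qed
  also have "\<dots> \<in> I k"
    by (rule Isum[OF fin]) (use prodI sgn in blast)
  finally have "- (e ^ k) \<in> I k" using detM by simp
  from Ineg[OF this] show ?thesis by simp
qed




definition ideal_R :: "'a::comm_ring_1 set \<Rightarrow> bool" where
  "ideal_R I \<longleftrightarrow> 0 \<in> I \<and> (\<forall>x\<in>I. \<forall>y\<in>I. x + y \<in> I) \<and> (\<forall>x\<in>I. \<forall>r. r * x \<in> I)"

lemma ideal_0: "ideal_R I \<Longrightarrow> 0 \<in> I" by (simp add: ideal_R_def)
lemma ideal_add: "ideal_R I \<Longrightarrow> x \<in> I \<Longrightarrow> y \<in> I \<Longrightarrow> x + y \<in> I" by (simp add: ideal_R_def)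
lemma ideal_lmult: "ideal_R I \<Longrightarrow> x \<in> I \<Longrightarrow> r * x \<in> I" by (simp add: ideal_R_def)
lemma ideal_rmult: "ideal_R I \<Longrightarrow> x \<in> I \<Longrightarrow> x * r \<in> I" by (metis ideal_lmult mult.commute)
lemma ideal_neg: "ideal_R I \<Longrightarrow> x \<in> I \<Longrightarrow> - x \<in> I" using ideal_lmult[of I x "-1"] by simp
lemma ideal_diff: "ideal_R I \<Longrightarrow> x \<in> I \<Longrightarrow> y \<in> I \<Longrightarrow> x - y \<in> I"
  by (metis diff_conv_add_uminus ideal_add ideal_neg)
lemma ideal_sum: "ideal_R I \<Longrightarrow> (\<And>i. i \<in> F \<Longrightarrow> f i \<in> I) \<Longrightarrow> sum f F \<in> I"
proof (induction F rule: infinite_finite_induct)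
  case (infinite A) then show ?case by (simp add: ideal_0)
next
  case empty then show ?case by (simp add: ideal_0)
next
  case (insert x F) then show ?case by (simp add: ideal_add)
qed

locale ctx0 =
  fixes D :: "'a::comm_ring_1 set" and p q :: 'a
  assumes Dsub: "is_subring D"
    and Ddom: "\<forall>a\<in>D. \<forall>b\<in>D. a * b = 0 \<longrightarrow> a = 0 \<or> b = 0"
    and pD: "p \<in> D" and p0: "p \<noteq> 0" and pnu: "\<not> (\<exists>u\<in>D. p * u = 1)"
    and pprime: "\<forall>a\<in>D. \<forall>b\<in>D. (\<exists>c\<in>D. a * b = p * c) \<longrightarrow> (\<exists>c\<in>D. a = p * c) \<or> (\<exists>c\<in>D. b = p * c)"
    and pinter: "\<forall>x. (\<forall>n::nat\<ge>1. \<exists>d\<in>D. x = p ^ n * d) \<longrightarrow> x = 0"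
    and pq: "p * q = 1"
begin

lemma D_mult_ne0: "a \<in> D \<Longrightarrow> b \<in> D \<Longrightarrow> a \<noteq> 0 \<Longrightarrow> b \<noteq> 0 \<Longrightarrow> a * b \<noteq> 0"
  using Ddom by blast

lemma D_cancel: assumes "a \<in> D" "b \<in> D" "c \<in> D" "a \<noteq> 0" "a * b = a * c" shows "b = c"
proof -
  have "a * (b - c) = 0" using assms(5) by (simp add: right_diff_distrib)
  moreover have "b - c \<in> D" using assms Dsub subring_diff by blast
  ultimately have "a = 0 \<or> b - c = 0" using Ddom assms(1) by blast
  then show ?thesis using assms(4) by simp
qed

lemma ppow_D: "p ^ n \<in> D" using Dsub pD subring_pow by blast

lemma ppow_ne0: "p ^ n \<noteq> 0"
  by (induction n) (auto simp: D_mult_ne0 pD p0 ppow_D)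

lemma exists_prime_ideal:
  "\<exists>P. ideal_R P \<and> (\<forall>a b. a * b \<in> P \<longrightarrow> a \<in> P \<or> b \<in> P) \<and> P \<inter> D = {0}"
proof -
  let ?F = "{I. ideal_R I \<and> I \<inter> D \<subseteq> {0}}"
  have z: "{0} \<in> ?F" by (simp add: ideal_R_def)
  have ch: "\<Union>C \<in> ?F" if C: "C \<subseteq> ?F" "chain\<^sub>\<subseteq> C" "C \<noteq> {}" for C
  proof -
    have "ideal_R (\<Union>C)" unfolding ideal_R_def
    proof (intro conjI ballI allI)
      obtain I where "I \<in> C" using C(3) by blast
      then show "0 \<in> \<Union>C" using C(1) ideal_0 by blast
    next
      fix x y assume "x \<in> \<Union>C" "y \<in> \<Union>C"
      then obtain I where I: "I \<in> C" "x \<in> I" "y \<in> I" using chain_two[OF C(2)] by blast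
      then have "x + y \<in> I" using C(1) ideal_add by blast
      then show "x + y \<in> \<Union>C" using I(1) by blast
    next
      fix x r assume "x \<in> \<Union>C"
      then obtain I where I: "I \<in> C" "x \<in> I" by blast
      then have "r * x \<in> I" using C(1) ideal_lmult by blast
      then show "r * x \<in> \<Union>C" using I(1) by blast
    qed
    moreover have "\<Union>C \<inter> D \<subseteq> {0}" using C(1) by blast
    ultimately show ?thesis by simp
  qed
  obtain M where M: "M \<in> ?F" and Mmax: "\<forall>X\<in>?F. M \<subseteq> X \<longrightarrow> X = M"
    using zorn_above[of "{0}" ?F, OF z ch] by blast
  have Mi: "ideal_R M" and MD: "M \<inter> D \<subseteq> {0}" using M by auto
  have ext: "\<exists>d\<in>D. d \<noteq> 0 \<and> (\<exists>m\<in>M. \<exists>r. d = m + r * a)" if a: "a \<notin> M" for a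
  proof (rule ccontr)
    assume na: "\<not> ?thesis"
    let ?I = "{m + r * a | m r. m \<in> M}"
    have "ideal_R ?I" unfolding ideal_R_def
    proof (intro conjI ballI allI)
      show "0 \<in> ?I" using ideal_0[OF Mi] by (intro CollectI exI[of _ 0] exI[of _ 0]) simp
    next
      fix x y assume "x \<in> ?I" "y \<in> ?I"
      then obtain m1 r1 m2 r2 where "x = m1 + r1 * a" "m1 \<in> M" "y = m2 + r2 * a" "m2 \<in> M" by blast
      then have "x + y = (m1 + m2) + (r1 + r2) * a" "m1 + m2 \<in> M"
        using ideal_add[OF Mi] by (auto simp: algebra_simps)
      then show "x + y \<in> ?I" by blast
    next
      fix x r assume "x \<in> ?I"
      then obtain m1 r1 where "x = m1 + r1 * a" "m1 \<in> M" by blast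
      then have "r * x = r * m1 + (r * r1) * a" "r * m1 \<in> M"
        using ideal_lmult[OF Mi] by (auto simp: algebra_simps)
      then show "r * x \<in> ?I" by blast
    qed
    moreover have "?I \<inter> D \<subseteq> {0}" using na by blast
    moreover have "M \<subseteq> ?I"
    proof
      fix x assume "x \<in> M"
      then show "x \<in> ?I" by (intro CollectI exI[of _ x] exI[of _ 0]) simp
    qed
    ultimately have "?I = M" using Mmax by blast
    moreover have "a \<in> ?I" using ideal_0[OF Mi] by (intro CollectI exI[of _ 0] exI[of _ 1]) simp
    ultimately show False using a by blast
  qed
  have prime: "a \<in> M \<or> b \<in> M" if ab: "a * b \<in> M" for a b
  proof (rule ccontr)
    assume "\<not> (a \<in> M \<or> b \<in> M)"
    then have "a \<notin> M" "b \<notin> M" by auto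
    then obtain d1 d2 m1 m2 r1 r2 where d: "d1 \<in> D" "d1 \<noteq> 0" "m1 \<in> M" "d1 = m1 + r1 * a"
      "d2 \<in> D" "d2 \<noteq> 0" "m2 \<in> M" "d2 = m2 + r2 * b"
      using ext by meson
    have "d1 * d2 = m1 * (m2 + r2 * b) + (r1 * a) * m2 + (r1 * r2) * (a * b)"
      unfolding d(4) d(8) by (simp add: algebra_simps)
    also have "\<dots> \<in> M"
    proof -
      have "m1 * (m2 + r2 * b) \<in> M" using ideal_rmult[OF Mi d(3)] .
      moreover have "(r1 * a) * m2 \<in> M" using ideal_lmult[OF Mi d(7)] .
      moreover have "(r1 * r2) * (a * b) \<in> M" using ideal_lmult[OF Mi ab] .
      ultimately show ?thesis using ideal_add[OF Mi] by presburger
    qed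
    finally have "d1 * d2 \<in> M" .
    moreover have "d1 * d2 \<in> D" using d Dsub subring_mult by blast
    moreover have "d1 * d2 \<noteq> 0" using d D_mult_ne0 by blast
    ultimately show False using MD by blast
  qed
  have "M \<inter> D = {0}" using MD ideal_0[OF Mi] Dsub subring_0 by blast
  then show ?thesis using Mi prime by blast
qed

end



context ctx0 begin

definition divp :: "nat \<Rightarrow> 'a \<Rightarrow> bool" where "divp n d \<longleftrightarrow> (\<exists>c\<in>D. d = p ^ n * c)"
definition ord :: "'a \<Rightarrow> nat" where "ord d = (GREATEST n. divp n d)"

lemma divp_bounded: assumes "d \<in> D" "d \<noteq> 0" shows "\<exists>B. \<forall>n. divp n d \<longrightarrow> n \<le> B"
proof (rule ccontr)
  assume "\<not> ?thesis"
  then have unb: "\<forall>B. \<exists>n. divp n d \<and> B < n" by (meson not_le)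
  have "\<forall>n::nat\<ge>1. \<exists>c\<in>D. d = p ^ n * c"
  proof (intro allI impI)
    fix n :: nat
    obtain m where m: "divp m d" "n < m" using unb by blast
    then obtain c where c: "c \<in> D" "d = p ^ m * c" unfolding divp_def by blast
    have "d = p ^ n * (p ^ (m - n) * c)" using c m(2)
      by (simp add: mult.assoc[symmetric] power_add[symmetric])
    moreover have "p ^ (m - n) * c \<in> D" using c ppow_D Dsub subring_mult by blast
    ultimately show "\<exists>c\<in>D. d = p ^ n * c" by blast
  qed
  then show False using pinter assms by blast
qed

lemma ord_spec: assumes "d \<in> D" "d \<noteq> 0"
  shows "divp (ord d) d" "\<And>n. divp n d \<Longrightarrow> n \<le> ord d"
proof -
  obtain B where B: "\<And>n. divp n d \<Longrightarrow> n \<le> B" using divp_bounded assms by blast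
  have d0: "divp 0 d" using assms unfolding divp_def by auto
  show "divp (ord d) d" unfolding ord_def using GreatestI_nat[of "\<lambda>n. divp n d", OF d0 B] .
  fix n assume "divp n d"
  then show "n \<le> ord d" unfolding ord_def using Greatest_le_nat[of "\<lambda>n. divp n d", OF _ B] by blast
qed

lemma ndivp_unit: "\<not> (\<exists>c'\<in>D. 1 = p * c')" using pnu by metis

lemma ord_unit: assumes "d \<in> D" "d \<noteq> 0"
  shows "\<exists>c\<in>D. d = p ^ ord d * c \<and> \<not> (\<exists>c'\<in>D. c = p * c')"
proof -
  obtain c where c: "c \<in> D" "d = p ^ ord d * c" using ord_spec(1)[OF assms] unfolding divp_def by blast
  have "\<not> (\<exists>c'\<in>D. c = p * c')"
  proof
    assume "\<exists>c'\<in>D. c = p * c'"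
    then obtain c' where "c' \<in> D" "c = p * c'" by blast
    then have "d = p ^ Suc (ord d) * c'" using c by (simp add: algebra_simps)
    then have "divp (Suc (ord d)) d" unfolding divp_def using \<open>c' \<in> D\<close> by blast
    then show False using ord_spec(2)[OF assms] by fastforce
  qed
  then show ?thesis using c by blast
qed

lemma ord_eq: assumes c: "c \<in> D" "\<not> (\<exists>c'\<in>D. c = p * c')" and d: "d = p ^ n * c"
  shows "ord d = n"
proof -
  have c0: "c \<noteq> 0"
  proof
    assume "c = 0"
    then have "c = p * 0" by simp
    moreover have "(0::'a) \<in> D" using Dsub subring_0 by blast
    ultimately show False using c(2) by blast
  qed
  have dD: "d \<in> D" unfolding d using subring_mult[OF Dsub ppow_D c(1)] .
  have d0: "d \<noteq> 0" unfolding d using D_mult_ne0[OF ppow_D c(1) ppow_ne0 c0] .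
  have le: "n \<le> ord d" using ord_spec(2)[OF dD d0] d c unfolding divp_def by blast
  have "\<not> n < ord d"
  proof
    assume lt: "n < ord d"
    obtain c'' where c'': "c'' \<in> D" "d = p ^ ord d * c''" using ord_spec(1)[OF dD d0] unfolding divp_def by blast
    have od: "ord d = n + Suc (ord d - n - 1)" using lt by simp
    have "p ^ n * c = p ^ n * (p * (p ^ (ord d - n - 1) * c''))"
    proof -
      have "p ^ n * c = p ^ ord d * c''" using c'' d by simp
      also have "\<dots> = p ^ (n + Suc (ord d - n - 1)) * c''" using od by simp
      also have "\<dots> = p ^ n * (p * (p ^ (ord d - n - 1) * c''))" by (simp only: power_add power_Suc mult.assoc)
      finally show ?thesis .
    qed
    moreover have in1: "p * (p ^ (ord d - n - 1) * c'') \<in> D" using c'' ppow_D pD Dsub subring_mult by blast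
    ultimately have "c = p * (p ^ (ord d - n - 1) * c'')"
      using D_cancel[OF ppow_D c(1) in1 ppow_ne0] by blast
    moreover have "p ^ (ord d - n - 1) * c'' \<in> D" using c'' ppow_D Dsub subring_mult by blast
    ultimately show False using c(2) by blast
  qed
  then show ?thesis using le by simp
qed

lemma ord_mult: assumes "a \<in> D" "b \<in> D" "a \<noteq> 0" "b \<noteq> 0" shows "ord (a * b) = ord a + ord b"
proof -
  obtain a' where a': "a' \<in> D" "a = p ^ ord a * a'" "\<not> (\<exists>c'\<in>D. a' = p * c')" using ord_unit assms by blast
  obtain b' where b': "b' \<in> D" "b = p ^ ord b * b'" "\<not> (\<exists>c'\<in>D. b' = p * c')" using ord_unit assms by blast
  have "\<not> (\<exists>c'\<in>D. a' * b' = p * c')" using pprime a' b' by blast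
  moreover have "a * b = p ^ (ord a + ord b) * (a' * b')"
  proof -
    have "a * b = (p ^ ord a * a') * (p ^ ord b * b')" using a'(2) b'(2) by simp
    also have "\<dots> = p ^ (ord a + ord b) * (a' * b')" by (simp add: power_add mult_ac)
    finally show ?thesis .
  qed
  moreover have "a' * b' \<in> D" using a' b' Dsub subring_mult by blast
  ultimately show ?thesis using ord_eq by blast
qed

lemma ord_add: assumes "a \<in> D" "b \<in> D" "a \<noteq> 0" "b \<noteq> 0" "a + b \<noteq> 0"
  shows "min (ord a) (ord b) \<le> ord (a + b)"
proof -
  let ?k = "min (ord a) (ord b)"
  obtain a' where a': "a' \<in> D" "a = p ^ ord a * a'" using ord_spec(1) assms unfolding divp_def by blast
  obtain b' where b': "b' \<in> D" "b = p ^ ord b * b'" using ord_spec(1) assms unfolding divp_def by blast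
  have "a + b = p ^ ?k * (p ^ (ord a - ?k) * a' + p ^ (ord b - ?k) * b')"
    using a' b' by (simp add: algebra_simps power_add[symmetric])
  moreover have "p ^ (ord a - ?k) * a' + p ^ (ord b - ?k) * b' \<in> D"
    using a' b' ppow_D Dsub subring_mult subring_add by blast
  ultimately have "divp ?k (a + b)" unfolding divp_def by blast
  moreover have "a + b \<in> D" using assms Dsub subring_add by blast
  ultimately show ?thesis using ord_spec(2) assms by blast
qed

lemma ord_p: "ord p = 1"
  using ord_eq[OF subring_1[OF Dsub] ndivp_unit, of p 1] by simp

lemma ord_1: "ord 1 = 0"
  using ord_eq[OF subring_1[OF Dsub] ndivp_unit, of 1 0] by simp

end

locale ctx = ctx0 +
  fixes P :: "'a set"
  assumes Pid: "ideal_R P" and Pprime: "\<forall>a b. a * b \<in> P \<longrightarrow> a \<in> P \<or> b \<in> P"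
    and PD: "P \<inter> D = {0}"
begin

lemma p_notP: "p \<notin> P" using PD pD p0 by blast
lemma one_notP: "1 \<notin> P"
proof
  assume "1 \<in> P"
  then have "1 \<in> P \<inter> D" using subring_1[OF Dsub] by simp
  then show False using PD by simp
qed
lemma mult_notP: "a \<notin> P \<Longrightarrow> b \<notin> P \<Longrightarrow> a * b \<notin> P" using Pprime by blast
lemma pow_notP: "a \<notin> P \<Longrightarrow> a ^ n \<notin> P" by (induction n) (auto simp: one_notP mult_notP)

definition valp :: "'a set \<Rightarrow> ('a \<Rightarrow> nat) \<Rightarrow> bool" where
  "valp A v \<longleftrightarrow> is_subring A \<and> P \<subseteq> A \<and> D \<subseteq> A \<and> (\<forall>a\<in>P. v a = 0) \<and> v p = 1 \<and>
     (\<forall>a\<in>A. \<forall>b\<in>A. a \<notin> P \<longrightarrow> b \<notin> P \<longrightarrow> v (a * b) = v a + v b) \<and>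
     (\<forall>a\<in>A. \<forall>b\<in>A. a \<notin> P \<longrightarrow> b \<notin> P \<longrightarrow> a + b \<notin> P \<longrightarrow> min (v a) (v b) \<le> v (a + b)) \<and>
     (\<forall>a\<in>A. \<forall>b\<in>A. a \<notin> P \<longrightarrow> a - b \<in> P \<longrightarrow> v a = v b)"

subsection \<open>Initial valuation\<close>

definition A0 :: "'a set" where "A0 = {x. \<exists>d\<in>D. x - d \<in> P}"
definition dof :: "'a \<Rightarrow> 'a" where "dof x = (THE d. d \<in> D \<and> x - d \<in> P)"
definition v0 :: "'a \<Rightarrow> nat" where "v0 x = (if x \<in> P then 0 else ord (dof x))"

lemma dof_unique: assumes "d \<in> D" "x - d \<in> P" "d' \<in> D" "x - d' \<in> P" shows "d = d'"
proof -
  have "d' - d = (x - d) - (x - d')" by simp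
  also have "\<dots> \<in> P" using assms Pid ideal_diff by blast
  finally have "d' - d \<in> P" .
  moreover have "d' - d \<in> D" using assms Dsub subring_diff by blast
  ultimately have "d' - d \<in> P \<inter> D" by simp
  then have "d' - d = 0" using PD by simp
  then show ?thesis by simp
qed

lemma dof: assumes "x \<in> A0" shows "dof x \<in> D" "x - dof x \<in> P"
proof -
  obtain d where d: "d \<in> D" "x - d \<in> P" using assms unfolding A0_def by blast
  have "dof x = d" unfolding dof_def using d dof_unique by blast
  then show "dof x \<in> D" "x - dof x \<in> P" using d by auto
qed

lemma dof_eq: "d \<in> D \<Longrightarrow> x - d \<in> P \<Longrightarrow> dof x = d"
  unfolding dof_def using dof_unique by blast

lemma dof_ne0: "x \<in> A0 \<Longrightarrow> x \<notin> P \<Longrightarrow> dof x \<noteq> 0"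
  using dof(2) by force

lemma A0_subring: "is_subring A0"
  unfolding is_subring_def
proof (intro conjI ballI)
  have "1 - 1 \<in> P" using ideal_0[OF Pid] by simp
  then show "1 \<in> A0" unfolding A0_def using subring_1[OF Dsub] by blast
next
  fix x y assume x: "x \<in> A0" and y: "y \<in> A0"
  have dx: "dof x \<in> D" "x - dof x \<in> P" using dof[OF x] by auto
  have dy: "dof y \<in> D" "y - dof y \<in> P" using dof[OF y] by auto
  have "(x + y) - (dof x + dof y) = (x - dof x) + (y - dof y)" by simp
  then have "(x + y) - (dof x + dof y) \<in> P" using dx dy Pid ideal_add by metis
  moreover have "dof x + dof y \<in> D" using dx dy Dsub subring_add by blast
  ultimately show "x + y \<in> A0" unfolding A0_def by blast
  have "x * y - dof x * dof y = (x - dof x) * y + dof x * (y - dof y)" by (simp add: algebra_simps)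
  then have "x * y - dof x * dof y \<in> P" using dx dy Pid ideal_add ideal_rmult ideal_lmult by metis
  moreover have "dof x * dof y \<in> D" using dx dy Dsub subring_mult by blast
  ultimately show "x * y \<in> A0" unfolding A0_def by blast
next
  fix x assume x: "x \<in> A0"
  have dx: "dof x \<in> D" "x - dof x \<in> P" using dof[OF x] by auto
  have "- x - (- dof x) = - (x - dof x)" by simp
  then have "- x - (- dof x) \<in> P" using dx Pid ideal_neg by metis
  moreover have "- dof x \<in> D" using dx Dsub subring_neg by blast
  ultimately show "- x \<in> A0" unfolding A0_def by blast
qed

lemma dof_mult: "x \<in> A0 \<Longrightarrow> y \<in> A0 \<Longrightarrow> dof (x * y) = dof x * dof y"
proof -
  assume x: "x \<in> A0" and y: "y \<in> A0"
  have dx: "dof x \<in> D" "x - dof x \<in> P" using dof[OF x] by auto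
  have dy: "dof y \<in> D" "y - dof y \<in> P" using dof[OF y] by auto
  have "x * y - dof x * dof y = (x - dof x) * y + dof x * (y - dof y)" by (simp add: algebra_simps)
  then have "x * y - dof x * dof y \<in> P" using dx dy Pid ideal_add ideal_rmult ideal_lmult by metis
  moreover have "dof x * dof y \<in> D" using dx dy Dsub subring_mult by blast
  ultimately show ?thesis using dof_eq by blast
qed

lemma dof_add: "x \<in> A0 \<Longrightarrow> y \<in> A0 \<Longrightarrow> dof (x + y) = dof x + dof y"
proof -
  assume x: "x \<in> A0" and y: "y \<in> A0"
  have dx: "dof x \<in> D" "x - dof x \<in> P" using dof[OF x] by auto
  have dy: "dof y \<in> D" "y - dof y \<in> P" using dof[OF y] by auto
  have "(x + y) - (dof x + dof y) = (x - dof x) + (y - dof y)" by simp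
  then have "(x + y) - (dof x + dof y) \<in> P" using dx dy Pid ideal_add by metis
  moreover have "dof x + dof y \<in> D" using dx dy Dsub subring_add by blast
  ultimately show ?thesis using dof_eq by blast
qed

lemma valp_A0: "valp A0 v0"
  unfolding valp_def
proof (intro conjI ballI impI)
  show "is_subring A0" by (rule A0_subring)
  show "P \<subseteq> A0"
  proof
    fix x assume "x \<in> P"
    then have "x - 0 \<in> P" by simp
    then show "x \<in> A0" unfolding A0_def using subring_0[OF Dsub] by blast
  qed
  show "D \<subseteq> A0"
  proof
    fix x assume "x \<in> D"
    moreover have "x - x \<in> P" using ideal_0[OF Pid] by simp
    ultimately show "x \<in> A0" unfolding A0_def by blast
  qed
next
  fix a assume "a \<in> P" then show "v0 a = 0" unfolding v0_def by simp
next
  have "dof p = p" using dof_eq[of p p] pD ideal_0[OF Pid] by simp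
  then show "v0 p = 1" unfolding v0_def using p_notP ord_p by simp
next
  fix a b assume a: "a \<in> A0" and b: "b \<in> A0" and aP: "a \<notin> P" and bP: "b \<notin> P"
  have "a * b \<notin> P" using aP bP mult_notP by blast
  then show "v0 (a * b) = v0 a + v0 b" unfolding v0_def using aP bP dof_mult[OF a b]
    ord_mult dof[OF a] dof[OF b] dof_ne0[OF a aP] dof_ne0[OF b bP] by simp
next
  fix a b assume a: "a \<in> A0" and b: "b \<in> A0" and aP: "a \<notin> P" and bP: "b \<notin> P" and abP: "a + b \<notin> P"
  have abA: "a + b \<in> A0" using A0_subring a b subring_add by blast
  show "min (v0 a) (v0 b) \<le> v0 (a + b)" unfolding v0_def using aP bP abP dof_add[OF a b]
    ord_add dof[OF a] dof[OF b] dof_ne0[OF a aP] dof_ne0[OF b bP] dof_ne0[OF abA abP] by simp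
next
  fix a b assume a: "a \<in> A0" and b: "b \<in> A0" and aP: "a \<notin> P" and abP: "a - b \<in> P"
  have bP: "b \<notin> P"
  proof
    assume "b \<in> P"
    then have "(a - b) + b \<in> P" using abP Pid ideal_add by blast
    then show False using aP by simp
  qed
  have "b - dof a = (a - dof a) - (a - b)" by simp
  then have "b - dof a \<in> P" using dof[OF a] abP Pid ideal_diff by metis
  then have "dof b = dof a" using dof_eq dof[OF a] by blast
  then show "v0 a = v0 b" unfolding v0_def using aP bP by simp
qed

end



context ctx begin

definition geq :: "('a \<Rightarrow> nat) \<Rightarrow> nat \<Rightarrow> 'a \<Rightarrow> bool" where "geq v \<theta> a \<longleftrightarrow> a \<in> P \<or> \<theta> \<le> v a"
definition gtr :: "('a \<Rightarrow> nat) \<Rightarrow> nat \<Rightarrow> 'a \<Rightarrow> bool" where "gtr v \<theta> a \<longleftrightarrow> a \<in> P \<or> \<theta> < v a"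

lemma notP_add: "a \<notin> P \<Longrightarrow> b \<in> P \<Longrightarrow> a + b \<notin> P"
proof
  assume "a \<notin> P" "b \<in> P" "a + b \<in> P"
  then have "(a + b) - b \<in> P" using Pid ideal_diff by blast
  then show False using \<open>a \<notin> P\<close> by simp
qed

context
  fixes A :: "'a set" and v :: "'a \<Rightarrow> nat"
  assumes vA: "valp A v"
begin

lemma vsub: "is_subring A" using vA by (simp add: valp_def)
lemma PA: "P \<subseteq> A" using vA by (simp add: valp_def)
lemma DA: "D \<subseteq> A" using vA by (simp add: valp_def)
lemma vP: "a \<in> P \<Longrightarrow> v a = 0" using vA by (simp add: valp_def)
lemma vp: "v p = 1" using vA by (simp add: valp_def)
lemma vmult: "a \<in> A \<Longrightarrow> b \<in> A \<Longrightarrow> a \<notin> P \<Longrightarrow> b \<notin> P \<Longrightarrow> v (a * b) = v a + v b"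
  using vA by (simp add: valp_def)
lemma vadd: "a \<in> A \<Longrightarrow> b \<in> A \<Longrightarrow> a \<notin> P \<Longrightarrow> b \<notin> P \<Longrightarrow> a + b \<notin> P \<Longrightarrow> min (v a) (v b) \<le> v (a + b)"
  using vA by (simp add: valp_def)
lemma vcong0: "a \<in> A \<Longrightarrow> b \<in> A \<Longrightarrow> a \<notin> P \<Longrightarrow> a - b \<in> P \<Longrightarrow> v a = v b"
  using vA unfolding valp_def by blast

lemma pA: "p \<in> A" using DA pD by blast

lemma vcong: assumes "a \<in> A" "b \<in> A" "a - b \<in> P" shows "v a = v b"
proof (cases "a \<in> P")
  case True
  have "a - (a - b) \<in> P" using True assms(3) Pid ideal_diff by blast
  then have "b \<in> P" by simp
  then show ?thesis using True vP by simp
next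
  case False then show ?thesis using vcong0 assms by blast
qed

lemma v1: "v 1 = 0"
proof -
  have "v (1 * 1) = v 1 + v 1" using vmult subring_1[OF vsub] one_notP by blast
  then show ?thesis by simp
qed

lemma vm1: "v (- 1) = 0"
proof -
  have m1: "- 1 \<in> A" using subring_neg[OF vsub subring_1[OF vsub]] .
  have "- 1 \<notin> P" using one_notP Pid ideal_neg by fastforce
  then have "v ((- 1) * (- 1)) = v (- 1) + v (- 1)" using vmult m1 by blast
  then show ?thesis using v1 by simp
qed

lemma vneg: assumes "a \<in> A" shows "v (- a) = v a"
proof (cases "a \<in> P")
  case True
  then have "- a \<in> P" using Pid ideal_neg by blast
  then show ?thesis using True vP by simp
next
  case False
  have m1: "- 1 \<in> A" using subring_neg[OF vsub subring_1[OF vsub]] .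
  have "- 1 \<notin> P" using one_notP Pid ideal_neg by fastforce
  then have "v ((- 1) * a) = v (- 1) + v a" using vmult m1 assms False by blast
  then show ?thesis using vm1 by simp
qed

lemma vpow: assumes "a \<in> A" "a \<notin> P" shows "v (a ^ n) = n * v a"
proof (induction n)
  case 0 then show ?case using v1 by simp
next
  case (Suc n)
  have "v (a * a ^ n) = v a + v (a ^ n)"
    using vmult assms subring_pow[OF vsub assms(1)] pow_notP by blast
  then show ?case using Suc by simp
qed

lemma geq_add: assumes "a \<in> A" "b \<in> A" "geq v \<theta> a" "geq v \<theta> b" shows "geq v \<theta> (a + b)"
proof (cases "a + b \<in> P")
  case True then show ?thesis by (simp add: geq_def)
next
  case abP: False
  show ?thesis
  proof (cases "a \<in> P")
    case True
    have "(a + b) - b \<in> P" using True by simp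
    then have "v (a + b) = v b" using vcong assms subring_add[OF vsub] by blast
    moreover have "b \<notin> P" using True abP Pid ideal_add by blast
    ultimately show ?thesis using assms(4) by (simp add: geq_def)
  next
    case aP: False
    show ?thesis
    proof (cases "b \<in> P")
      case True
      have "(a + b) - a \<in> P" using True by simp
      then have "v (a + b) = v a" using vcong assms subring_add[OF vsub] by blast
      then show ?thesis using assms(3) aP by (simp add: geq_def)
    next
      case False
      have "\<theta> \<le> min (v a) (v b)" using assms(3,4) aP False by (simp add: geq_def)
      then have "\<theta> \<le> v (a + b)" using vadd[OF assms(1,2) aP False abP] by linarith
      then show ?thesis by (simp add: geq_def)
    qed
  qed
qed

lemma gtr_add: assumes "a \<in> A" "b \<in> A" "gtr v \<theta> a" "gtr v \<theta> b" shows "gtr v \<theta> (a + b)"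
proof -
  have "geq v (Suc \<theta>) a" "geq v (Suc \<theta>) b" using assms(3,4) by (auto simp: geq_def gtr_def)
  then have "geq v (Suc \<theta>) (a + b)" using geq_add assms(1,2) by blast
  then show ?thesis by (auto simp: geq_def gtr_def)
qed

lemma gtr_sum: assumes "finite F" "\<forall>i\<in>F. f i \<in> A \<and> gtr v \<theta> (f i)" shows "gtr v \<theta> (sum f F) \<and> sum f F \<in> A"
  using assms
proof (induction F rule: finite_induct)
  case empty
  then show ?case using ideal_0[OF Pid] subring_0[OF vsub] by (simp add: gtr_def)
next
  case (insert x F)
  then show ?case using gtr_add subring_add[OF vsub] by simp
qed

lemma geq_sum: assumes "finite F" "\<forall>i\<in>F. f i \<in> A \<and> geq v \<theta> (f i)" shows "geq v \<theta> (sum f F) \<and> sum f F \<in> A"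
  using assms
proof (induction F rule: finite_induct)
  case empty
  then show ?case using ideal_0[OF Pid] subring_0[OF vsub] by (simp add: geq_def)
next
  case (insert x F)
  then show ?case using geq_add subring_add[OF vsub] by simp
qed

lemma geq_mult: assumes "a \<in> A" "b \<in> A" "geq v \<theta> a" "geq v \<theta>' b" shows "geq v (\<theta> + \<theta>') (a * b)"
proof (cases "a \<in> P \<or> b \<in> P")
  case True
  then have "a * b \<in> P" using Pid ideal_rmult ideal_lmult by blast
  then show ?thesis by (simp add: geq_def)
next
  case False
  then show ?thesis using vmult assms by (auto simp: geq_def)
qed

lemma gtr_mult: assumes "a \<in> A" "b \<in> A" "gtr v \<theta> a" "geq v \<theta>' b" shows "gtr v (\<theta> + \<theta>') (a * b)"
proof (cases "a \<in> P \<or> b \<in> P")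
  case True
  then have "a * b \<in> P" using Pid ideal_rmult ideal_lmult by blast
  then show ?thesis by (simp add: gtr_def)
next
  case False
  then show ?thesis using vmult assms by (auto simp: geq_def gtr_def)
qed

lemma strict: assumes t: "t \<in> A" "t \<notin> P" and r: "r \<in> A" "gtr v (v t) r"
  shows "t + r \<notin> P \<and> v (t + r) = v t"
proof (cases "r \<in> P")
  case True
  have "t + r \<notin> P" using notP_add t True by blast
  moreover have "(t + r) - t \<in> P" using True by simp
  ultimately show ?thesis using vcong t r subring_add[OF vsub] by blast
next
  case False
  have lt: "v t < v r" using r False by (simp add: gtr_def)
  have tr: "t + r \<in> A" using subring_add[OF vsub t(1) r(1)] .
  have nP: "t + r \<notin> P"
  proof
    assume "t + r \<in> P"
    then have "t - (- r) \<in> P" by simp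
    then have "v t = v (- r)" using vcong t r subring_neg[OF vsub] by blast
    then show False using vneg r lt by simp
  qed
  have ge: "v t \<le> v (t + r)" using vadd[OF t(1) r(1) t(2) False nP] lt by simp
  have "\<not> v t < v (t + r)"
  proof
    assume lt2: "v t < v (t + r)"
    have mr: "- r \<in> A" using subring_neg[OF vsub r(1)] .
    have mrP: "- r \<notin> P"
    proof
      assume "- r \<in> P" then have "- (- r) \<in> P" using Pid ideal_neg by blast
      then show False using False by simp
    qed
    have "(t + r) + - r \<notin> P" using t(2) by simp
    then have "min (v (t + r)) (v (- r)) \<le> v ((t + r) + - r)"
      using vadd[OF tr mr nP mrP] by blast
    then show False using lt lt2 vneg[OF r(1)] by simp
  qed
  then show ?thesis using nP ge by simp
qed

end
end



context ctx begin

definition transc :: "'a set \<Rightarrow> 'a \<Rightarrow> bool" where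
  "transc A r \<longleftrightarrow> (\<forall>g. (\<forall>i. coeff g i \<in> A) \<longrightarrow> poly g r \<in> P \<longrightarrow> (\<forall>i. coeff g i \<in> P))"

definition gset :: "('a \<Rightarrow> nat) \<Rightarrow> 'a poly \<Rightarrow> nat set" where
  "gset v g = {v (coeff g i) | i. coeff g i \<notin> P}"

definition gv :: "('a \<Rightarrow> nat) \<Rightarrow> 'a poly \<Rightarrow> nat" where
  "gv v g = Min (gset v g)"

lemma gset_finite: "finite (gset v g)"
proof -
  have "gset v g \<subseteq> (\<lambda>i. v (coeff g i)) ` {..degree g}"
  proof
    fix x assume "x \<in> gset v g"
    then obtain i where i: "x = v (coeff g i)" "coeff g i \<notin> P" unfolding gset_def by blast
    have "coeff g i \<noteq> 0" using i(2) ideal_0[OF Pid] by auto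
    then have "i \<le> degree g" using le_degree by blast
    then show "x \<in> (\<lambda>i. v (coeff g i)) ` {..degree g}" using i(1) by blast
  qed
  then show ?thesis by (rule finite_subset) simp
qed

lemma gv_spec: assumes "\<exists>i. coeff g i \<notin> P"
  shows "\<And>i. coeff g i \<notin> P \<Longrightarrow> gv v g \<le> v (coeff g i)"
    and "\<exists>i. coeff g i \<notin> P \<and> v (coeff g i) = gv v g"
proof -
  have ne: "gset v g \<noteq> {}" using assms unfolding gset_def by blast
  fix i assume "coeff g i \<notin> P"
  then have "v (coeff g i) \<in> gset v g" unfolding gset_def by blast
  then show "gv v g \<le> v (coeff g i)" unfolding gv_def using gset_finite by simp
next
  have ne: "gset v g \<noteq> {}" using assms unfolding gset_def by blast
  have "gv v g \<in> gset v g" unfolding gv_def using Min_in[OF gset_finite ne] .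
  then show "\<exists>i. coeff g i \<notin> P \<and> v (coeff g i) = gv v g" unfolding gset_def by auto
qed

lemma gset_const: assumes "a \<notin> P" shows "gset v [:a:] = {v a}"
proof (rule Set.set_eqI)
  fix x
  show "x \<in> gset v [:a:] \<longleftrightarrow> x \<in> {v a}"
  proof
    assume "x \<in> gset v [:a:]"
    then obtain i where i: "x = v (coeff [:a:] i)" "coeff [:a:] i \<notin> P" unfolding gset_def by blast
    show "x \<in> {v a}"
    proof (cases i)
      case 0 then show ?thesis using i by simp
    next
      case (Suc j) then show ?thesis using i ideal_0[OF Pid] by simp
    qed
  next
    assume "x \<in> {v a}"
    then have "x = v (coeff [:a:] 0)" "coeff [:a:] 0 \<notin> P" using assms by simp_all
    then show "x \<in> gset v [:a:]" unfolding gset_def by blast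
  qed
qed

lemma poly_notP: assumes "poly g r \<notin> P" shows "\<exists>i. coeff g i \<notin> P"
proof (rule ccontr)
  assume "\<not> ?thesis"
  then have "\<forall>i. coeff g i \<in> P" by blast
  then have "poly g r \<in> P" unfolding poly_altdef
    by (intro ideal_sum[OF Pid] ideal_rmult[OF Pid]) blast
  then show False using assms by blast
qed

context
  fixes A :: "'a set" and v :: "'a \<Rightarrow> nat" and r :: 'a
  assumes vA: "valp A v" and tr: "transc A r"
begin

lemma gv_cong:
  assumes f: "\<forall>i. coeff f i \<in> A" and g: "\<forall>i. coeff g i \<in> A" and fg: "poly f r - poly g r \<in> P"
  shows "gset v f = gset v g"
proof -
  have "\<forall>i. coeff (f - g) i \<in> A" using f g subring_diff[OF vsub[OF vA]] by simp
  moreover have "poly (f - g) r \<in> P" using fg by simp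
  ultimately have d: "\<forall>i. coeff f i - coeff g i \<in> P" using tr unfolding transc_def by fastforce
  have iff: "coeff f i \<notin> P \<longleftrightarrow> coeff g i \<notin> P" for i
  proof
    assume "coeff f i \<notin> P"
    show "coeff g i \<notin> P"
    proof
      assume "coeff g i \<in> P"
      then have "(coeff f i - coeff g i) + coeff g i \<in> P" using d Pid ideal_add by blast
      then show False using \<open>coeff f i \<notin> P\<close> by simp
    qed
  next
    assume "coeff g i \<notin> P"
    show "coeff f i \<notin> P"
    proof
      assume "coeff f i \<in> P"
      then have "coeff f i - (coeff f i - coeff g i) \<in> P" using d Pid ideal_diff by blast
      then show False using \<open>coeff g i \<notin> P\<close> by simp
    qed
  qed
  have eqv: "v (coeff f i) = v (coeff g i)" for i using vcong[OF vA] f g d by blast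
  show ?thesis unfolding gset_def using iff eqv by metis
qed

definition A' :: "'a set" where "A' = adjoin A r"
definition v' :: "'a \<Rightarrow> nat" where
  "v' x = (if x \<in> P then 0 else gv v (SOME g. (\<forall>i. coeff g i \<in> A) \<and> poly g r = x))"

lemma v'_eq: assumes g: "\<forall>i. coeff g i \<in> A" and nP: "poly g r \<notin> P" shows "v' (poly g r) = gv v g"
proof -
  have ex: "\<exists>g'. (\<forall>i. coeff g' i \<in> A) \<and> poly g' r = poly g r" using g by blast
  define g' where "g' = (SOME g'. (\<forall>i. coeff g' i \<in> A) \<and> poly g' r = poly g r)"
  have g': "(\<forall>i. coeff g' i \<in> A) \<and> poly g' r = poly g r" unfolding g'_def using someI_ex[OF ex] .
  have "poly g' r - poly g r \<in> P" using g' ideal_0[OF Pid] by simp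
  then have "gset v g' = gset v g" using gv_cong g g' by blast
  then show ?thesis unfolding v'_def g'_def gv_def using nP by simp
qed

lemma gauss_mult:
  assumes f: "\<forall>i. coeff f i \<in> A" and g: "\<forall>i. coeff g i \<in> A"
    and fP: "\<exists>i. coeff f i \<notin> P" and gP: "\<exists>i. coeff g i \<notin> P"
  shows "(\<exists>i. coeff (f * g) i \<notin> P) \<and> gv v (f * g) = gv v f + gv v g"
proof -
  let ?mf = "gv v f" and ?mg = "gv v g"
  have Asub: "is_subring A" using vsub[OF vA] .
  define i0 where "i0 = (LEAST i. coeff f i \<notin> P \<and> v (coeff f i) = ?mf)"
  define j0 where "j0 = (LEAST i. coeff g i \<notin> P \<and> v (coeff g i) = ?mg)"
  have i0: "coeff f i0 \<notin> P" "v (coeff f i0) = ?mf"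
    using LeastI_ex[OF gv_spec(2)[OF fP]] unfolding i0_def by blast+
  have j0: "coeff g j0 \<notin> P" "v (coeff g j0) = ?mg"
    using LeastI_ex[OF gv_spec(2)[OF gP]] unfolding j0_def by blast+
  have fge: "geq v ?mf (coeff f i)" for i using gv_spec(1)[OF fP] by (auto simp: geq_def)
  have gge: "geq v ?mg (coeff g i)" for i using gv_spec(1)[OF gP] by (auto simp: geq_def)
  have fgt: "gtr v ?mf (coeff f i)" if "i < i0" for i
  proof (cases "coeff f i \<in> P")
    case True then show ?thesis by (simp add: gtr_def)
  next
    case False
    have "\<not> (coeff f i \<notin> P \<and> v (coeff f i) = ?mf)" using not_less_Least[OF that[unfolded i0_def]] .
    then have "v (coeff f i) \<noteq> ?mf" using False by blast
    then show ?thesis using gv_spec(1)[where v=v, OF fP False] by (simp add: gtr_def)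
  qed
  have ggt: "gtr v ?mg (coeff g j)" if "j < j0" for j
  proof (cases "coeff g j \<in> P")
    case True then show ?thesis by (simp add: gtr_def)
  next
    case False
    have "\<not> (coeff g j \<notin> P \<and> v (coeff g j) = ?mg)" using not_less_Least[OF that[unfolded j0_def]] .
    then have "v (coeff g j) \<noteq> ?mg" using False by blast
    then show ?thesis using gv_spec(1)[where v=v, OF gP False] by (simp add: gtr_def)
  qed
  have term_in: "coeff f i * coeff g j \<in> A" for i j using f g subring_mult[OF Asub] by blast
  have allge: "geq v (?mf + ?mg) (coeff (f * g) n)" for n
  proof -
    have "\<forall>i\<in>{..n}. coeff f i * coeff g (n - i) \<in> A \<and> geq v (?mf + ?mg) (coeff f i * coeff g (n - i))"
    proof
      fix i
      show "coeff f i * coeff g (n - i) \<in> A \<and> geq v (?mf + ?mg) (coeff f i * coeff g (n - i))"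
        using geq_mult[OF vA f[rule_format, of i] g[rule_format, of "n - i"] fge[of i] gge[of "n - i"]] term_in[of i "n - i"]
        by simp
    qed
    then have "geq v (?mf + ?mg) (\<Sum>i\<le>n. coeff f i * coeff g (n - i))"
      using geq_sum[OF vA, of "{..n}" "\<lambda>i. coeff f i * coeff g (n - i)"] by simp
    then show ?thesis by (simp add: coeff_mult)
  qed
  let ?n0 = "i0 + j0"
  have split: "coeff (f * g) ?n0 = coeff f i0 * coeff g j0 + (\<Sum>i\<in>{..?n0} - {i0}. coeff f i * coeff g (?n0 - i))"
    unfolding coeff_mult by (subst sum.remove[of _ i0]) auto
  have rest: "gtr v (?mf + ?mg) (\<Sum>i\<in>{..?n0} - {i0}. coeff f i * coeff g (?n0 - i))"
  proof -
    have "\<forall>i\<in>{..?n0} - {i0}. coeff f i * coeff g (?n0 - i) \<in> A \<and> gtr v (?mf + ?mg) (coeff f i * coeff g (?n0 - i))"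
    proof
      fix i assume i: "i \<in> {..?n0} - {i0}"
      show "coeff f i * coeff g (?n0 - i) \<in> A \<and> gtr v (?mf + ?mg) (coeff f i * coeff g (?n0 - i))"
      proof (cases "i < i0")
        case True
        then show ?thesis
          using gtr_mult[OF vA f[rule_format, of i] g[rule_format, of "?n0 - i"] fgt[OF True] gge[of "?n0 - i"]] term_in[of i "?n0 - i"]
          by simp
      next
        case False
        then have "?n0 - i < j0" using i by auto
        then have "gtr v ?mg (coeff g (?n0 - i))" using ggt by blast
        then have "gtr v (?mg + ?mf) (coeff g (?n0 - i) * coeff f i)"
          using gtr_mult[OF vA g[rule_format, of "?n0 - i"] f[rule_format, of i] _ fge[of i]] by simp
        then show ?thesis using term_in by (simp add: mult.commute add.commute)
      qed
    qed
    then show ?thesis using gtr_sum[OF vA, of "{..?n0} - {i0}"] by simp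
  qed
  have t0: "coeff f i0 * coeff g j0 \<notin> P" using mult_notP[OF i0(1) j0(1)] .
  have vt0: "v (coeff f i0 * coeff g j0) = ?mf + ?mg"
    using vmult[OF vA f[rule_format, of i0] g[rule_format, of j0] i0(1) j0(1)] i0(2) j0(2) by simp
  have restA: "(\<Sum>i\<in>{..?n0} - {i0}. coeff f i * coeff g (?n0 - i)) \<in> A"
    by (rule subring_sum[OF Asub]) (rule term_in)
  have st0: "gtr v (v (coeff f i0 * coeff g j0)) (\<Sum>i\<in>{..?n0} - {i0}. coeff f i * coeff g (?n0 - i))"
    using rest vt0 by simp
  have st: "coeff (f * g) ?n0 \<notin> P \<and> v (coeff (f * g) ?n0) = ?mf + ?mg"
    unfolding split using strict[OF vA term_in[of i0 j0] t0 restA st0] vt0 by simp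
  have ex: "\<exists>i. coeff (f * g) i \<notin> P" using st by blast
  have "Min (gset v (f * g)) = ?mf + ?mg"
  proof (rule Min_eqI[OF gset_finite])
    fix y assume "y \<in> gset v (f * g)"
    then obtain n where "y = v (coeff (f * g) n)" "coeff (f * g) n \<notin> P" unfolding gset_def by blast
    then show "?mf + ?mg \<le> y" using allge[of n] by (simp add: geq_def)
  next
    show "?mf + ?mg \<in> gset v (f * g)" unfolding gset_def using st by force
  qed
  then have "gv v (f * g) = ?mf + ?mg" by (simp only: gv_def[of v "f * g"])
  then show ?thesis using ex by blast
qed

lemma gauss_add:
  assumes f: "\<forall>i. coeff f i \<in> A" and g: "\<forall>i. coeff g i \<in> A"
    and fP: "\<exists>i. coeff f i \<notin> P" and gP: "\<exists>i. coeff g i \<notin> P" and fgP: "\<exists>i. coeff (f + g) i \<notin> P"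
  shows "min (gv v f) (gv v g) \<le> gv v (f + g)"
proof -
  let ?m = "min (gv v f) (gv v g)"
  have "geq v ?m (coeff (f + g) i)" for i
  proof -
    have "geq v ?m (coeff f i)" "geq v ?m (coeff g i)"
      using gv_spec(1)[where v=v, OF fP, of i] gv_spec(1)[where v=v, OF gP, of i] by (auto simp: geq_def min_le_iff_disj)
    then show ?thesis using geq_add[OF vA] f g by simp
  qed
  moreover obtain i where "coeff (f + g) i \<notin> P" "v (coeff (f + g) i) = gv v (f + g)"
    using gv_spec(2)[where v=v, OF fgP] by blast
  ultimately show ?thesis unfolding geq_def by metis
qed

lemma A'_subring: "is_subring A'" unfolding A'_def using adjoin_subring[OF vsub[OF vA]] .

lemma A'_rep: "x \<in> A' \<Longrightarrow> \<exists>g. (\<forall>i. coeff g i \<in> A) \<and> x = poly g r"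
  unfolding A'_def adjoin_def by blast

lemma valp_A': "valp A' v'"
  unfolding valp_def
proof (intro conjI ballI impI)
  show "is_subring A'" by (rule A'_subring)
  show "P \<subseteq> A'" using PA[OF vA] adjoin_sub[OF vsub[OF vA]] unfolding A'_def by blast
  show "D \<subseteq> A'" using DA[OF vA] adjoin_sub[OF vsub[OF vA]] unfolding A'_def by blast
next
  fix a assume "a \<in> P" then show "v' a = 0" unfolding v'_def by simp
next
  have c: "\<forall>i. coeff [:p:] i \<in> A" using pA[OF vA] subring_0[OF vsub[OF vA]]
    by (auto simp: coeff_pCons split: nat.split)
  have "v' (poly [:p:] r) = gv v [:p:]" using v'_eq[OF c] p_notP by simp
  also have "gv v [:p:] = 1"
  proof -
    have "gset v [:p:] = {v p}" using gset_const p_notP by blast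
    then show ?thesis unfolding gv_def using vp[OF vA] by simp
  qed
  finally show "v' p = 1" by simp
next
  fix a b assume a: "a \<in> A'" and b: "b \<in> A'" and aP: "a \<notin> P" and bP: "b \<notin> P"
  obtain f where f: "\<forall>i. coeff f i \<in> A" "a = poly f r" using A'_rep a by blast
  obtain g where g: "\<forall>i. coeff g i \<in> A" "b = poly g r" using A'_rep b by blast
  have fP: "\<exists>i. coeff f i \<notin> P" using poly_notP aP f by blast
  have gP: "\<exists>i. coeff g i \<notin> P" using poly_notP bP g by blast
  have fg: "\<forall>i. coeff (f * g) i \<in> A" using coeff_mult_in[OF vsub[OF vA] f(1) g(1)] .
  have abP: "poly (f * g) r \<notin> P" using mult_notP[OF aP bP] f g by simp
  have "v' (a * b) = gv v (f * g)" using v'_eq[OF fg abP] f g by simp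
  also have "\<dots> = gv v f + gv v g" using gauss_mult[OF f(1) g(1) fP gP] by simp
  finally show "v' (a * b) = v' a + v' b" using v'_eq[OF f(1)] v'_eq[OF g(1)] f g aP bP by simp
next
  fix a b assume a: "a \<in> A'" and b: "b \<in> A'" and aP: "a \<notin> P" and bP: "b \<notin> P" and abP: "a + b \<notin> P"
  obtain f where f: "\<forall>i. coeff f i \<in> A" "a = poly f r" using A'_rep a by blast
  obtain g where g: "\<forall>i. coeff g i \<in> A" "b = poly g r" using A'_rep b by blast
  have fP: "\<exists>i. coeff f i \<notin> P" using poly_notP aP f by blast
  have gP: "\<exists>i. coeff g i \<notin> P" using poly_notP bP g by blast
  have fg: "\<forall>i. coeff (f + g) i \<in> A" using f g subring_add[OF vsub[OF vA]] by simp
  have abP': "poly (f + g) r \<notin> P" using abP f g by simp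
  have fgP: "\<exists>i. coeff (f + g) i \<notin> P" using poly_notP abP' by blast
  have "v' (a + b) = gv v (f + g)" using v'_eq[OF fg abP'] f g by simp
  then show "min (v' a) (v' b) \<le> v' (a + b)"
    using gauss_add[OF f(1) g(1) fP gP fgP] v'_eq[OF f(1)] v'_eq[OF g(1)] f g aP bP by simp
next
  fix a b assume a: "a \<in> A'" and b: "b \<in> A'" and aP: "a \<notin> P" and abP: "a - b \<in> P"
  obtain f where f: "\<forall>i. coeff f i \<in> A" "a = poly f r" using A'_rep a by blast
  obtain g where g: "\<forall>i. coeff g i \<in> A" "b = poly g r" using A'_rep b by blast
  have bP: "b \<notin> P"
  proof
    assume "b \<in> P"
    then have "(a - b) + b \<in> P" using abP Pid ideal_add by blast
    then show False using aP by simp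
  qed
  have "gset v f = gset v g" using gv_cong[OF f(1) g(1)] abP f g by simp
  then show "v' a = v' b" using v'_eq[OF f(1)] v'_eq[OF g(1)] f g aP bP unfolding gv_def by simp
qed

lemma v'_ext: assumes "a \<in> A" shows "v' a = v a"
proof (cases "a \<in> P")
  case True then show ?thesis unfolding v'_def using vP[OF vA] by simp
next
  case False
  have c: "\<forall>i. coeff [:a:] i \<in> A" using assms subring_0[OF vsub[OF vA]]
    by (auto simp: coeff_pCons split: nat.split)
  have "v' (poly [:a:] r) = gv v [:a:]" using v'_eq[OF c] False by simp
  also have "gv v [:a:] = v a"
  proof -
    have "gset v [:a:] = {v a}" using gset_const False by blast
    then show ?thesis unfolding gv_def by simp
  qed
  finally show ?thesis by simp
qed

lemma r_in_A': "r \<in> A'" unfolding A'_def using adjoin_gen[OF vsub[OF vA]] .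

lemma r_notin_A: "r \<notin> A"
proof
  assume rA: "r \<in> A"
  let ?g = "[:- r, 1:]"
  have c: "\<forall>i. coeff ?g i \<in> A" using rA vsub[OF vA] subring_neg subring_1 subring_0
    by (auto simp: coeff_pCons split: nat.split)
  have "poly ?g r = 0" by simp
  then have "\<forall>i. coeff ?g i \<in> P" using tr c ideal_0[OF Pid] unfolding transc_def by metis
  then have "1 \<in> P" by (metis coeff_pCons_0 coeff_pCons_Suc)
  then show False using one_notP by blast
qed

lemma A_sub_A': "A \<subseteq> A'" unfolding A'_def using adjoin_sub[OF vsub[OF vA]] .

end
end



context ctx begin


definition gr :: "'a set \<Rightarrow> ('a \<Rightarrow> nat) \<Rightarrow> ('a \<times> nat) set" where
  "gr A v = (\<lambda>a. (a, v a)) ` A"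

lemma gr_fst: "fst ` gr A v = A" unfolding gr_def by force

lemma gr_mem: "(a, n) \<in> gr A v \<longleftrightarrow> a \<in> A \<and> n = v a" unfolding gr_def by auto

lemma chain_valp:
  assumes CZ: "C \<subseteq> {gr A v | A v. valp A v}" and ch: "chain\<^sub>\<subseteq> C" and ne: "C \<noteq> {}"
  shows "\<Union>C \<in> {gr A v | A v. valp A v}"
proof -
  let ?U = "\<Union>C"
  define AU where "AU = fst ` ?U"
  define vU where "vU a = (SOME n. (a, n) \<in> ?U)" for a
  have mem: "\<exists>A v. valp A v \<and> \<Gamma> = gr A v" if "\<Gamma> \<in> C" for \<Gamma> using CZ that by blast
  have func: "n = m" if hh: "(a, n) \<in> ?U" "(a, m) \<in> ?U" for a n m
  proof -
    obtain \<Gamma> where \<Gamma>: "\<Gamma> \<in> C" "(a, n) \<in> \<Gamma>" "(a, m) \<in> \<Gamma>" using chain_two[OF ch hh] by blast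
    obtain A v where "valp A v" "\<Gamma> = gr A v" using mem[OF \<Gamma>(1)] by blast
    then show ?thesis using \<Gamma> gr_mem by metis
  qed
  have vU_eq: "vU a = n" if hh: "(a, n) \<in> ?U" for a n
  proof -
    have "(a, vU a) \<in> ?U" unfolding vU_def using someI[of "\<lambda>n. (a, n) \<in> ?U", OF hh] .
    then show ?thesis using func hh by blast
  qed
  have inU: "(a, vU a) \<in> ?U" if hh: "a \<in> AU" for a
  proof -
    obtain n where "(a, n) \<in> ?U" using hh unfolding AU_def by force
    then show ?thesis using vU_eq by metis
  qed
  have memA: "\<exists>A v. valp A v \<and> \<Gamma> = gr A v \<and> (\<forall>x\<in>A. vU x = v x) \<and> A \<subseteq> AU" if hh: "\<Gamma> \<in> C" for \<Gamma>
  proof -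
    obtain A v where Av: "valp A v" "\<Gamma> = gr A v" using mem[OF hh] by blast
    have "\<forall>x\<in>A. vU x = v x"
    proof
      fix x assume "x \<in> A"
      then have "(x, v x) \<in> ?U" using Av(2) hh gr_mem by blast
      then show "vU x = v x" using vU_eq by blast
    qed
    moreover have "A \<subseteq> AU"
    proof
      fix x assume "x \<in> A"
      then have "(x, v x) \<in> ?U" using Av(2) hh gr_mem by blast
      then show "x \<in> AU" unfolding AU_def by force
    qed
    ultimately show ?thesis using Av hh by blast
  qed
  have common: "\<exists>A v. valp A v \<and> a \<in> A \<and> b \<in> A \<and> (\<forall>x\<in>A. vU x = v x) \<and> A \<subseteq> AU"
    if hh: "a \<in> AU" "b \<in> AU" for a b
  proof -
    obtain \<Gamma> where \<Gamma>: "\<Gamma> \<in> C" "(a, vU a) \<in> \<Gamma>" "(b, vU b) \<in> \<Gamma>" using chain_two[OF ch inU[OF hh(1)] inU[OF hh(2)]] by blast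
    obtain A v where Av: "valp A v" "\<Gamma> = gr A v" "\<forall>x\<in>A. vU x = v x" "A \<subseteq> AU"
      using memA[OF \<Gamma>(1)] by blast
    have "a \<in> A" "b \<in> A" using \<Gamma>(2,3) Av(2) gr_mem by blast+
    then show ?thesis using Av by blast
  qed
  obtain \<Gamma>0 where \<Gamma>0: "\<Gamma>0 \<in> C" using ne by blast
  obtain A0' v0' where A0': "valp A0' v0'" "\<forall>x\<in>A0'. vU x = v0' x" "A0' \<subseteq> AU"
    using memA[OF \<Gamma>0] by blast
  have "valp AU vU" unfolding valp_def
  proof (intro conjI ballI impI)
    show "is_subring AU" unfolding is_subring_def
    proof (intro conjI ballI)
      show "1 \<in> AU" using A0' subring_1[OF vsub[OF A0'(1)]] by blast
    next
      fix x y assume "x \<in> AU" "y \<in> AU"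
      then obtain A v where Av: "valp A v" "x \<in> A" "y \<in> A" "A \<subseteq> AU" using common by blast
      show "x + y \<in> AU" using Av subring_add[OF vsub[OF Av(1)]] by blast
      show "x * y \<in> AU" using Av subring_mult[OF vsub[OF Av(1)]] by blast
    next
      fix x assume "x \<in> AU"
      then obtain A v where Av: "valp A v" "x \<in> A" "A \<subseteq> AU" using common by blast
      show "- x \<in> AU" using Av subring_neg[OF vsub[OF Av(1)]] by blast
    qed
    show "P \<subseteq> AU" using A0' PA[OF A0'(1)] by blast
    show "D \<subseteq> AU" using A0' DA[OF A0'(1)] by blast
  next
    fix a assume "a \<in> P"
    then show "vU a = 0" using A0' PA[OF A0'(1)] vP[OF A0'(1)] by auto
  next
    show "vU p = 1" using A0' pA[OF A0'(1)] vp[OF A0'(1)] by auto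
  next
    fix a b assume ab: "a \<in> AU" "b \<in> AU" "a \<notin> P" "b \<notin> P"
    obtain A v where Av: "valp A v" "a \<in> A" "b \<in> A" "\<forall>x\<in>A. vU x = v x" using common[OF ab(1,2)] by blast
    have "a * b \<in> A" using Av subring_mult[OF vsub[OF Av(1)]] by blast
    then show "vU (a * b) = vU a + vU b" using Av vmult[OF Av(1)] ab by simp
  next
    fix a b assume ab: "a \<in> AU" "b \<in> AU" "a \<notin> P" "b \<notin> P" "a + b \<notin> P"
    obtain A v where Av: "valp A v" "a \<in> A" "b \<in> A" "\<forall>x\<in>A. vU x = v x" using common[OF ab(1,2)] by blast
    have "a + b \<in> A" using Av subring_add[OF vsub[OF Av(1)]] by blast
    then show "min (vU a) (vU b) \<le> vU (a + b)" using Av vadd[OF Av(1)] ab by simp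
  next
    fix a b assume ab: "a \<in> AU" "b \<in> AU" "a \<notin> P" "a - b \<in> P"
    obtain A v where Av: "valp A v" "a \<in> A" "b \<in> A" "\<forall>x\<in>A. vU x = v x" using common[OF ab(1,2)] by blast
    then show "vU a = vU b" using vcong[OF Av(1)] ab by simp
  qed
  moreover have "?U = gr AU vU"
  proof
    show "?U \<subseteq> gr AU vU"
    proof
      fix z assume z: "z \<in> ?U"
      obtain a n where an: "z = (a, n)" by (cases z)
      have "a \<in> AU" using z an unfolding AU_def by force
      moreover have "n = vU a" using vU_eq z an by simp
      ultimately show "z \<in> gr AU vU" using an gr_mem by simp
    qed
  next
    show "gr AU vU \<subseteq> ?U"
    proof
      fix z assume "z \<in> gr AU vU"
      then obtain a where "a \<in> AU" "z = (a, vU a)" unfolding gr_def by blast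
      then show "z \<in> ?U" using inU by simp
    qed
  qed
  ultimately show ?thesis by blast
qed

lemma exists_alg: "\<exists>A v. valp A v \<and> (\<forall>r. \<not> transc A r)"
proof -
  let ?Z = "{gr A v | A v. valp A v}"
  have z0: "gr A0 v0 \<in> ?Z" using valp_A0 by blast
  obtain M where M: "M \<in> ?Z" and Mmax: "\<forall>X\<in>?Z. M \<subseteq> X \<longrightarrow> X = M"
    using zorn_above[OF z0 chain_valp] by blast
  obtain A v where Av: "valp A v" "M = gr A v" using M by blast
  have "\<not> transc A r" for r
  proof
    assume tr: "transc A r"
    let ?A' = "A' A r" and ?v' = "v' A v r"
    have V': "valp ?A' ?v'" using valp_A'[OF Av(1) tr] .
    have sub: "gr A v \<subseteq> gr ?A' ?v'"
      using A_sub_A'[OF Av(1) tr] v'_ext[OF Av(1) tr] unfolding gr_def by auto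
    have "gr ?A' ?v' = gr A v" using Mmax V' sub Av(2) by blast
    then have "?A' = A" using gr_fst by metis
    then show False using r_in_A'[OF Av(1) tr] r_notin_A[OF Av(1) tr] by simp
  qed
  then show ?thesis using Av(1) by blast
qed

end



context ctx begin

inductive_set Jset :: "'a set \<Rightarrow> ('a \<Rightarrow> nat) \<Rightarrow> 'a set \<Rightarrow> nat \<Rightarrow> 'a set" for A v S \<theta> where
  Jbase: "d \<in> A \<Longrightarrow> gtr v \<theta> d \<Longrightarrow> w \<in> S \<Longrightarrow> d * w \<in> Jset A v S \<theta>"
| Jadd: "x \<in> Jset A v S \<theta> \<Longrightarrow> y \<in> Jset A v S \<theta> \<Longrightarrow> x + y \<in> Jset A v S \<theta>"

definition Dom :: "'a set \<Rightarrow> ('a \<Rightarrow> nat) \<Rightarrow> 'a set \<Rightarrow> bool" where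
  "Dom A v S \<longleftrightarrow> (\<forall>e\<in>A. e \<notin> P \<longrightarrow> e \<notin> Jset A v S (v e))"

definition Fam :: "'a set \<Rightarrow> ('a \<Rightarrow> nat) \<Rightarrow> 'a set set" where
  "Fam A v = {S. is_subring S \<and> A \<subseteq> S \<and> Dom A v S}"

lemma Jmono_S: "x \<in> Jset A v S \<theta> \<Longrightarrow> S \<subseteq> S' \<Longrightarrow> x \<in> Jset A v S' \<theta>"
  by (induction rule: Jset.induct) (auto intro: Jset.intros)

lemma Jmono_th: "x \<in> Jset A v S \<theta> \<Longrightarrow> \<theta>' \<le> \<theta> \<Longrightarrow> x \<in> Jset A v S \<theta>'"
proof (induction rule: Jset.induct)
  case (Jbase d w)
  have "gtr v \<theta>' d" using Jbase by (auto simp: gtr_def)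
  then show ?case using Jbase Jset.Jbase by blast
next
  case (Jadd x y) then show ?case using Jset.Jadd by blast
qed

context
  fixes A :: "'a set" and v :: "'a \<Rightarrow> nat"
  assumes vA: "valp A v"
begin

lemma J0: assumes "is_subring S" shows "0 \<in> Jset A v S \<theta>"
proof -
  have "0 * 1 \<in> Jset A v S \<theta>"
    using Jbase[of 0 A v \<theta> 1 S] PA[OF vA] ideal_0[OF Pid] subring_1[OF assms] by (auto simp: gtr_def)
  then show ?thesis by simp
qed

lemma Jneg: assumes "is_subring S" "x \<in> Jset A v S \<theta>" shows "- x \<in> Jset A v S \<theta>"
  using assms(2)
proof (induction rule: Jset.induct)
  case (Jbase d w)
  have "d * (- w) \<in> Jset A v S \<theta>" using Jbase subring_neg[OF assms(1)] Jset.Jbase by blast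
  then show ?case by simp
next
  case (Jadd x y)
  have "- x + - y \<in> Jset A v S \<theta>" using Jadd Jset.Jadd by blast
  then show ?case by (simp add: add.commute)
qed

lemma JmultS: assumes "is_subring S" "s \<in> S" "x \<in> Jset A v S \<theta>" shows "s * x \<in> Jset A v S \<theta>"
  using assms(3)
proof (induction rule: Jset.induct)
  case (Jbase d w)
  have "d * (s * w) \<in> Jset A v S \<theta>" using Jbase subring_mult[OF assms(1,2)] Jset.Jbase by blast
  then show ?case by (simp add: mult_ac)
next
  case (Jadd x y)
  then show ?case using Jset.Jadd by (simp add: distrib_left)
qed

lemma JmultA: assumes "a \<in> A" "x \<in> Jset A v S \<theta>" shows "a * x \<in> Jset A v S (\<theta> + v a)"
  using assms(2)
proof (induction rule: Jset.induct)
  case (Jbase d w)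
  have "geq v (v a) a" by (simp add: geq_def)
  then have "gtr v (\<theta> + v a) (d * a)" using gtr_mult[OF vA Jbase(1) assms(1) Jbase(2)] by simp
  moreover have "d * a \<in> A" using subring_mult[OF vsub[OF vA] Jbase(1) assms(1)] .
  ultimately have "(d * a) * w \<in> Jset A v S (\<theta> + v a)" using Jbase(3) Jset.Jbase by blast
  then show ?case by (simp add: mult_ac)
next
  case (Jadd x y)
  then show ?case using Jset.Jadd by (simp add: distrib_left)
qed

lemma Jmult: assumes S: "is_subring S" and x: "x \<in> Jset A v S \<theta>" and y: "y \<in> Jset A v S \<theta>'"
  shows "x * y \<in> Jset A v S (\<theta> + \<theta>')"
  using x
proof (induction rule: Jset.induct)
  case (Jbase d w)
  show ?case using y
  proof (induction rule: Jset.induct)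
    case (Jbase d' w')
    have "geq v \<theta>' d'" using Jbase(2) by (auto simp: geq_def gtr_def)
    then have "gtr v (\<theta> + \<theta>') (d * d')" using gtr_mult[OF vA \<open>d \<in> A\<close> Jbase(1) \<open>gtr v \<theta> d\<close>] by simp
    moreover have "d * d' \<in> A" using subring_mult[OF vsub[OF vA] \<open>d \<in> A\<close> Jbase(1)] .
    moreover have "w * w' \<in> S" using subring_mult[OF S \<open>w \<in> S\<close> Jbase(3)] .
    ultimately have "(d * d') * (w * w') \<in> Jset A v S (\<theta> + \<theta>')" using Jset.Jbase by blast
    then show ?case by (simp add: mult_ac)
  next
    case (Jadd x y)
    then show ?case using Jset.Jadd by (simp add: distrib_left)
  qed
next
  case (Jadd x1 x2)
  then show ?case using Jset.Jadd by (simp add: distrib_right)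
qed

lemma Jsum: assumes S: "is_subring S" and "finite F" "\<forall>i\<in>F. f i \<in> Jset A v S \<theta>"
  shows "sum f F \<in> Jset A v S \<theta>"
  using assms(2,3)
proof (induction F rule: finite_induct)
  case empty then show ?case using J0[OF S] by simp
next
  case (insert x F) then show ?case using Jset.Jadd by simp
qed

lemma J_A: "x \<in> Jset A v A \<theta> \<Longrightarrow> x \<in> A \<and> gtr v \<theta> x"
proof (induction rule: Jset.induct)
  case (Jbase d w)
  have g0: "geq v 0 w" by (simp add: geq_def)
  have "gtr v \<theta> (d * w)" using gtr_mult[OF vA Jbase(1) Jbase(3) Jbase(2) g0] by simp
  then show ?case using subring_mult[OF vsub[OF vA] Jbase(1) Jbase(3)] by blast
next
  case (Jadd x y)
  then show ?case using gtr_add[OF vA] subring_add[OF vsub[OF vA]] by blast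
qed

lemma Dom_A: "Dom A v A"
  unfolding Dom_def
proof (intro ballI impI notI)
  fix e assume "e \<in> A" "e \<notin> P" "e \<in> Jset A v A (v e)"
  then have "gtr v (v e) e" using J_A by blast
  then show False using \<open>e \<notin> P\<close> by (simp add: gtr_def)
qed

lemma A_Fam: "A \<in> Fam A v" unfolding Fam_def using vsub[OF vA] Dom_A by blast

lemma J_chain: assumes ch: "chain\<^sub>\<subseteq> C" and ne: "C \<noteq> {}" and x: "x \<in> Jset A v (\<Union>C) \<theta>"
  shows "\<exists>S\<in>C. x \<in> Jset A v S \<theta>"
  using x
proof (induction rule: Jset.induct)
  case (Jbase d w)
  then obtain S where "S \<in> C" "w \<in> S" by blast
  then show ?case using Jbase Jset.Jbase by blast
next
  case (Jadd x y)
  then obtain S1 S2 where S: "S1 \<in> C" "x \<in> Jset A v S1 \<theta>" "S2 \<in> C" "y \<in> Jset A v S2 \<theta>" by blast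
  show ?case
  proof (cases "S1 \<subseteq> S2")
    case True
    then have "x \<in> Jset A v S2 \<theta>" using Jmono_S S(2) by blast
    then show ?thesis using S Jset.Jadd by blast
  next
    case False
    then have "S2 \<subseteq> S1" using ch S(1,3) unfolding chain_subset_def by blast
    then have "y \<in> Jset A v S1 \<theta>" using Jmono_S S(4) by blast
    then show ?thesis using S Jset.Jadd by blast
  qed
qed

lemma Fam_chain: assumes "C \<subseteq> Fam A v" "chain\<^sub>\<subseteq> C" "C \<noteq> {}" shows "\<Union>C \<in> Fam A v"
proof -
  have "is_subring (\<Union>C)" using subring_chain assms unfolding Fam_def by blast
  moreover have "A \<subseteq> \<Union>C" using assms unfolding Fam_def by blast
  moreover have "Dom A v (\<Union>C)" unfolding Dom_def
  proof (intro ballI impI notI)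
    fix e assume e: "e \<in> A" "e \<notin> P" "e \<in> Jset A v (\<Union>C) (v e)"
    then obtain S where S: "S \<in> C" "e \<in> Jset A v S (v e)" using J_chain assms(2,3) by blast
    then have "Dom A v S" using assms(1) unfolding Fam_def by blast
    then show False using e S unfolding Dom_def by blast
  qed
  ultimately show ?thesis unfolding Fam_def by blast
qed

lemma exists_V: "\<exists>V\<in>Fam A v. A \<subseteq> V \<and> (\<forall>X\<in>Fam A v. V \<subseteq> X \<longrightarrow> X = V)"
  using zorn_above[OF A_Fam Fam_chain] by blast

lemma v1': "v 1 = 0" using v1[OF vA] .

context
  fixes V :: "'a set"
  assumes VF: "V \<in> Fam A v" and Vmax: "\<forall>X\<in>Fam A v. V \<subseteq> X \<longrightarrow> X = V"
begin

lemma Vsub: "is_subring V" using VF unfolding Fam_def by blast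
lemma AV: "A \<subseteq> V" using VF unfolding Fam_def by blast
lemma VDom: "Dom A v V" using VF unfolding Fam_def by blast

lemma q_notin_V: "q \<notin> V"
proof
  assume qV: "q \<in> V"
  have "gtr v (v 1) p" using vp[OF vA] v1[OF vA] by (simp add: gtr_def)
  then have "p * q \<in> Jset A v V (v 1)" using Jbase pA[OF vA] qV by blast
  then have "1 \<in> Jset A v V (v 1)" using pq by simp
  then show False using VDom subring_1[OF vsub[OF vA]] one_notP unfolding Dom_def by blast
qed

lemma adjoin_in_Fam: assumes "Dom A v (adjoin V y)" shows "y \<in> V"
proof -
  have "adjoin V y \<in> Fam A v" unfolding Fam_def
    using adjoin_subring[OF Vsub] AV adjoin_sub[OF Vsub] assms by blast
  then have "adjoin V y = V" using Vmax adjoin_sub[OF Vsub] by blast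
  then show ?thesis using adjoin_gen[OF Vsub] by blast
qed

lemma int_closed:
  assumes K: "K \<ge> 1" and c: "\<forall>i<K. c i \<in> V" and rel: "y ^ K + (\<Sum>i<K. c i * y ^ i) = 0"
  shows "y \<in> V"
proof (rule adjoin_in_Fam)
  show "Dom A v (adjoin V y)" unfolding Dom_def
  proof (intro ballI impI notI)
    fix e assume eA: "e \<in> A" and eP: "e \<notin> P" and eJ: "e \<in> Jset A v (adjoin V y) (v e)"
    have rep: "\<And>j. \<exists>s. (\<forall>l<K. s l \<in> Jset A v V \<theta>) \<and> z * y ^ j = (\<Sum>l<K. s l * y ^ l)"
      if z: "z \<in> Jset A v (adjoin V y) \<theta>" for z \<theta>
      using z
    proof (induction rule: Jset.induct)
      case (Jbase d t)
      fix j
      have "t * y ^ j \<in> adjoin V y"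
        using subring_mult[OF adjoin_subring[OF Vsub] Jbase(3) subring_pow[OF adjoin_subring[OF Vsub] adjoin_gen[OF Vsub]]] .
      then obtain s where s: "\<forall>l<K. s l \<in> V" "t * y ^ j = (\<Sum>l<K. s l * y ^ l)"
        using monic_reduce[OF Vsub K c rel] by blast
      have "d * t * y ^ j = (\<Sum>l<K. (d * s l) * y ^ l)"
        using s(2) by (simp add: sum_distrib_left mult.assoc)
      moreover have "\<forall>l<K. d * s l \<in> Jset A v V \<theta>" using s(1) Jbase Jset.Jbase by blast
      ultimately show "\<exists>s. (\<forall>l<K. s l \<in> Jset A v V \<theta>) \<and> d * t * y ^ j = (\<Sum>l<K. s l * y ^ l)"
        by (intro exI[of _ "\<lambda>l. d * s l"] conjI)
    next
      case (Jadd x1 x2)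
      fix j
      obtain s1 where s1: "\<forall>l<K. s1 l \<in> Jset A v V \<theta>" "x1 * y ^ j = (\<Sum>l<K. s1 l * y ^ l)" using Jadd.IH(1) by blast
      obtain s2 where s2: "\<forall>l<K. s2 l \<in> Jset A v V \<theta>" "x2 * y ^ j = (\<Sum>l<K. s2 l * y ^ l)" using Jadd.IH(2) by blast
      have "(x1 + x2) * y ^ j = (\<Sum>l<K. (s1 l + s2 l) * y ^ l)"
        using s1(2) s2(2) by (simp add: distrib_right sum.distrib)
      moreover have "\<forall>l<K. s1 l + s2 l \<in> Jset A v V \<theta>" using s1(1) s2(1) Jset.Jadd by blast
      ultimately show "\<exists>s. (\<forall>l<K. s l \<in> Jset A v V \<theta>) \<and> (x1 + x2) * y ^ j = (\<Sum>l<K. s l * y ^ l)"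
        by (intro exI[of _ "\<lambda>l. s1 l + s2 l"] conjI)
    qed
    define E where "E j = (SOME s. (\<forall>l<K. s l \<in> Jset A v V (v e)) \<and> e * y ^ j = (\<Sum>l<K. s l * y ^ l))" for j
    have E: "(\<forall>l<K. E j l \<in> Jset A v V (v e)) \<and> e * y ^ j = (\<Sum>l<K. E j l * y ^ l)" for j
      unfolding E_def using someI_ex[OF rep[OF eJ, of j]] .
    let ?I = "\<lambda>n. Jset A v V (n * v e)"
    have "e ^ K \<in> ?I K"
    proof (rule GL[where m = "\<lambda>l. y ^ l" and E = E])
      show "1 \<le> K" using K .
      show "y ^ 0 = 1" by simp
      show "\<forall>j<K. e * y ^ j = (\<Sum>l<K. E j l * y ^ l)" using E by blast
      show "\<forall>j<K. \<forall>l<K. E j l \<in> ?I 1" using E by simp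
      show "\<And>n. 0 \<in> ?I n" using J0[OF Vsub] .
      show "\<And>n a b. a \<in> ?I n \<Longrightarrow> b \<in> ?I n \<Longrightarrow> a + b \<in> ?I n" using Jset.Jadd by blast
      show "\<And>n a. a \<in> ?I n \<Longrightarrow> - a \<in> ?I n" using Jneg[OF Vsub] by blast
      show "\<And>n a. a \<in> ?I n \<Longrightarrow> e * a \<in> ?I (Suc n)"
      proof -
        fix n a assume "a \<in> ?I n"
        then have "e * a \<in> Jset A v V (n * v e + v e)" using JmultA[OF eA] by blast
        then show "e * a \<in> ?I (Suc n)" by (simp add: add.commute)
      qed
      show "\<And>n n' a b. a \<in> ?I n \<Longrightarrow> b \<in> ?I n' \<Longrightarrow> a * b \<in> ?I (n + n')"
      proof -
        fix n n' a b assume "a \<in> ?I n" "b \<in> ?I n'"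
        then have "a * b \<in> Jset A v V (n * v e + n' * v e)" using Jmult[OF Vsub] by blast
        then show "a * b \<in> ?I (n + n')" by (simp add: add_mult_distrib)
      qed
    qed
    moreover have "v (e ^ K) = K * v e" using vpow[OF vA eA eP] .
    moreover have "e ^ K \<in> A" using subring_pow[OF vsub[OF vA] eA] .
    moreover have "e ^ K \<notin> P" using pow_notP[OF eP] .
    ultimately have "e ^ K \<in> Jset A v V (v (e ^ K))" "e ^ K \<in> A" "e ^ K \<notin> P" by simp_all
    then show False using VDom unfolding Dom_def by blast
  qed
qed

end
end
end



context ctx begin
context
  fixes A :: "'a set" and v :: "'a \<Rightarrow> nat"
  assumes vA: "valp A v"
begin
context
  fixes V :: "'a set"
  assumes VF: "V \<in> Fam A v" and Vmax: "\<forall>X\<in>Fam A v. V \<subseteq> X \<longrightarrow> X = V"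
begin

lemma alg_elem: assumes nt: "\<not> transc A r" shows "\<exists>n. p ^ n * r \<in> V"
proof -
  have Asub: "is_subring A" using vsub[OF vA] .
  have AVs: "A \<subseteq> V" using AV[OF vA VF Vmax] .
  have Vs: "is_subring V" using Vsub[OF vA VF Vmax] .
  obtain g where g: "\<forall>i. coeff g i \<in> A" "poly g r \<in> P" "\<exists>i. coeff g i \<notin> P"
    using nt unfolding transc_def by blast
  let ?S = "{i. coeff g i \<notin> P}"
  have Sfin: "finite ?S"
  proof (rule finite_subset[of _ "{..degree g}"])
    show "?S \<subseteq> {..degree g}"
    proof
      fix i assume "i \<in> ?S"
      then have "coeff g i \<noteq> 0" using ideal_0[OF Pid] by auto
      then show "i \<in> {..degree g}" using le_degree by simp
    qed
  qed simp
  have Sne: "?S \<noteq> {}" using g(3) by blast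
  define k where "k = Max ?S"
  define a where "a = coeff g k"
  have aP: "a \<notin> P" unfolding a_def k_def using Max_in[OF Sfin Sne] by blast
  have aA: "a \<in> A" unfolding a_def using g(1) by blast
  have above: "coeff g i \<in> P" if "k < i" for i
    using Max_ge[OF Sfin, of i] that unfolding k_def by fastforce
  have kdeg: "k \<le> degree g"
  proof -
    have "coeff g k \<noteq> 0" using aP ideal_0[OF Pid] unfolding a_def by auto
    then show ?thesis using le_degree by blast
  qed
  have sumk: "(\<Sum>i\<le>k. coeff g i * r ^ i) \<in> P"
  proof -
    have "(\<Sum>i\<le>k. coeff g i * r ^ i) = poly g r - (\<Sum>i\<in>{..degree g} - {..k}. coeff g i * r ^ i)"
      unfolding poly_altdef using sum_diff[of "{..degree g}" "{..k}" "\<lambda>i. coeff g i * r ^ i"] kdeg by auto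
    moreover have "(\<Sum>i\<in>{..degree g} - {..k}. coeff g i * r ^ i) \<in> P"
    proof (rule ideal_sum[OF Pid])
      fix i assume "i \<in> {..degree g} - {..k}"
      then have "k < i" by simp
      then show "coeff g i * r ^ i \<in> P" by (rule ideal_rmult[OF Pid above])
    qed
    ultimately show ?thesis using g(2) ideal_diff[OF Pid] by metis
  qed
  have k1: "k \<ge> 1"
  proof (rule ccontr)
    assume "\<not> k \<ge> 1"
    then have "k = 0" by simp
    then have "(\<Sum>i\<le>k. coeff g i * r ^ i) = a" unfolding a_def by simp
    then show False using sumk aP by simp
  qed
  define y where "y = a * r"
  define c where "c i = coeff g i * a ^ (k - 1 - i)" for i
  have ident: "y ^ k + (\<Sum>i<k. c i * y ^ i) = a ^ (k - 1) * (\<Sum>i\<le>k. coeff g i * r ^ i)"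
  proof -
    have s1: "(\<Sum>i\<le>k. coeff g i * r ^ i) = (\<Sum>i<k. coeff g i * r ^ i) + a * r ^ k"
      unfolding a_def by (simp add: lessThan_Suc_atMost[symmetric])
    have s2: "a ^ (k - 1) * (a * r ^ k) = y ^ k"
    proof -
      have "a ^ (k - 1) * (a * r ^ k) = a ^ Suc (k - 1) * r ^ k" by (simp add: mult.assoc)
      also have "Suc (k - 1) = k" using k1 by simp
      finally show ?thesis unfolding y_def by (simp add: power_mult_distrib)
    qed
    have s3: "a ^ (k - 1) * (\<Sum>i<k. coeff g i * r ^ i) = (\<Sum>i<k. c i * y ^ i)"
      unfolding sum_distrib_left
    proof (rule sum.cong[OF refl])
      fix i assume "i \<in> {..<k}"
      then have "k - 1 = (k - 1 - i) + i" by simp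
      then have "a ^ (k - 1) = a ^ (k - 1 - i) * a ^ i" by (metis power_add)
      then show "a ^ (k - 1) * (coeff g i * r ^ i) = c i * y ^ i"
        unfolding c_def y_def by (simp add: power_mult_distrib mult_ac)
    qed
    show ?thesis unfolding s1 distrib_left s2 s3 by (simp add: add.commute)
  qed
  define \<pi> where "\<pi> = y ^ k + (\<Sum>i<k. c i * y ^ i)"
  have \<pi>P: "\<pi> \<in> P" unfolding \<pi>_def ident using ideal_lmult[OF Pid sumk] .
  define c' where "c' i = (if i = 0 then c 0 - \<pi> else c i)" for i
  have rel: "y ^ k + (\<Sum>i<k. c' i * y ^ i) = 0"
  proof -
    have "(\<Sum>i<k. c' i * y ^ i) = (\<Sum>i<k. c i * y ^ i - (if i = 0 then \<pi> else 0))"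
      unfolding c'_def by (intro sum.cong refl) (simp add: left_diff_distrib)
    also have "\<dots> = (\<Sum>i<k. c i * y ^ i) - \<pi>"
      using k1 by (simp add: sum_subtractf sum.delta)
    finally show ?thesis unfolding \<pi>_def by simp
  qed
  have cV: "\<forall>i<k. c' i \<in> V"
  proof (intro allI impI)
    fix i assume "i < k"
    have "c i \<in> A" unfolding c_def using g(1) aA subring_mult[OF Asub] subring_pow[OF Asub] by blast
    moreover have "\<pi> \<in> A" using \<pi>P PA[OF vA] by blast
    ultimately have "c' i \<in> A" unfolding c'_def using subring_diff[OF Asub] by auto
    then show "c' i \<in> V" using AVs by blast
  qed
  have yV: "y \<in> V" using int_closed[OF vA VF Vmax k1 cV rel] .
  define n where "n = v a"
  define z where "z = p ^ n * r"
  have az: "a * z = p ^ n * y" unfolding z_def y_def by (simp add: mult_ac)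
  have "z \<in> V"
  proof (rule adjoin_in_Fam[OF vA VF Vmax])
    show "Dom A v (adjoin V z)" unfolding Dom_def
    proof (intro ballI impI notI)
      fix e assume eA: "e \<in> A" and eP: "e \<notin> P" and eJ: "e \<in> Jset A v (adjoin V z) (v e)"
      have claim: "\<exists>N0. \<forall>N\<ge>N0. a ^ N * x \<in> Jset A v V (\<theta> + N * n)"
        if xJ: "x \<in> Jset A v (adjoin V z) \<theta>" for x \<theta>
        using xJ
      proof (induction rule: Jset.induct)
        case (Jbase d t)
        obtain h where h: "\<forall>i. coeff h i \<in> V" "t = poly h z" using Jbase(3) unfolding adjoin_def by blast
        have "\<forall>N\<ge>degree h. a ^ N * (d * t) \<in> Jset A v V (\<theta> + N * n)"
        proof (intro allI impI)
          fix N assume N: "degree h \<le> N"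
          have trm: "a ^ N * (d * (coeff h j * z ^ j)) = (d * a ^ (N - j) * p ^ (n * j)) * (coeff h j * y ^ j)"
            if j: "j \<le> degree h" for j
          proof -
            have e1: "a ^ N = a ^ (N - j) * a ^ j" using j N by (metis le_add_diff_inverse2 le_trans power_add)
            have e2: "a ^ j * z ^ j = p ^ (n * j) * y ^ j"
              using az by (metis power_mult power_mult_distrib)
            have "a ^ N * (d * (coeff h j * z ^ j)) = d * coeff h j * a ^ (N - j) * (a ^ j * z ^ j)"
              unfolding e1 by (simp add: mult_ac)
            also have "\<dots> = d * coeff h j * a ^ (N - j) * (p ^ (n * j) * y ^ j)" unfolding e2 ..
            also have "\<dots> = (d * a ^ (N - j) * p ^ (n * j)) * (coeff h j * y ^ j)" by (simp add: mult_ac)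
            finally show ?thesis .
          qed
          have "a ^ N * (d * t) = (\<Sum>j\<le>degree h. (d * a ^ (N - j) * p ^ (n * j)) * (coeff h j * y ^ j))"
            unfolding h(2) poly_altdef sum_distrib_left using trm by (intro sum.cong refl) (simp add: mult_ac)
          also have "\<dots> \<in> Jset A v V (\<theta> + N * n)"
          proof (rule Jsum[OF vA Vs], simp, intro ballI)
            fix j assume "j \<in> {..degree h}"
            then have jN: "j \<le> N" using N by simp
            have aj: "a ^ (N - j) \<in> A" "p ^ (n * j) \<in> A"
              using subring_pow[OF Asub aA] subring_pow[OF Asub pA[OF vA]] by blast+
            have g1: "geq v ((N - j) * n) (a ^ (N - j))" unfolding geq_def n_def using vpow[OF vA aA aP] by simp
            have g2: "geq v (n * j) (p ^ (n * j))" unfolding geq_def using vpow[OF vA pA[OF vA] p_notP] vp[OF vA] by simp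
            have t1: "gtr v (\<theta> + (N - j) * n) (d * a ^ (N - j))" using gtr_mult[OF vA Jbase(1) aj(1) Jbase(2) g1] .
            have d1: "d * a ^ (N - j) \<in> A" using subring_mult[OF Asub Jbase(1) aj(1)] .
            have t2: "gtr v (\<theta> + (N - j) * n + n * j) (d * a ^ (N - j) * p ^ (n * j))"
              using gtr_mult[OF vA d1 aj(2) t1 g2] .
            have "\<theta> + (N - j) * n + n * j = \<theta> + N * n" using jN
              by (metis add.assoc add_mult_distrib le_add_diff_inverse2 mult.commute)
            then have t3: "gtr v (\<theta> + N * n) (d * a ^ (N - j) * p ^ (n * j))" using t2 by metis
            have d2: "d * a ^ (N - j) * p ^ (n * j) \<in> A" using subring_mult[OF Asub d1 aj(2)] .
            have w: "coeff h j * y ^ j \<in> V" using subring_mult[OF Vs h(1)[rule_format] subring_pow[OF Vs yV]] .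
            show "d * a ^ (N - j) * p ^ (n * j) * (coeff h j * y ^ j) \<in> Jset A v V (\<theta> + N * n)"
              using Jset.Jbase[OF d2 t3 w] .
          qed
          finally show "a ^ N * (d * t) \<in> Jset A v V (\<theta> + N * n)" .
        qed
        then show ?case by blast
      next
        case (Jadd x1 x2)
        obtain N1 where N1: "\<forall>N\<ge>N1. a ^ N * x1 \<in> Jset A v V (\<theta> + N * n)" using Jadd.IH(1) by blast
        obtain N2 where N2: "\<forall>N\<ge>N2. a ^ N * x2 \<in> Jset A v V (\<theta> + N * n)" using Jadd.IH(2) by blast
        have "\<forall>N\<ge>max N1 N2. a ^ N * (x1 + x2) \<in> Jset A v V (\<theta> + N * n)"
        proof (intro allI impI)
          fix N assume "max N1 N2 \<le> N"
          then have "a ^ N * x1 \<in> Jset A v V (\<theta> + N * n)" "a ^ N * x2 \<in> Jset A v V (\<theta> + N * n)"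
            using N1 N2 by auto
          then show "a ^ N * (x1 + x2) \<in> Jset A v V (\<theta> + N * n)"
            using Jset.Jadd by (simp add: distrib_left)
        qed
        then show ?case by blast
      qed
      obtain N0 where N0: "\<forall>N\<ge>N0. a ^ N * e \<in> Jset A v V (v e + N * n)" using claim[OF eJ] by blast
      have mem: "a ^ N0 * e \<in> Jset A v V (v e + N0 * n)" using N0 by blast
      have vv: "v (a ^ N0 * e) = v e + N0 * n"
        using vmult[OF vA subring_pow[OF Asub aA] eA pow_notP[OF aP] eP] vpow[OF vA aA aP] n_def by simp
      have "a ^ N0 * e \<in> A" using subring_mult[OF Asub subring_pow[OF Asub aA] eA] .
      moreover have "a ^ N0 * e \<notin> P" using mult_notP[OF pow_notP[OF aP] eP] .
      moreover have "a ^ N0 * e \<in> Jset A v V (v (a ^ N0 * e))" using mem vv by simp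
      ultimately show False using VDom[OF vA VF Vmax] unfolding Dom_def by blast
    qed
  qed
  then show ?thesis unfolding z_def by blast
qed

end
end

lemma exists_S0: "\<exists>V. is_subring V \<and> D \<subseteq> V \<and> q \<notin> V \<and> (\<forall>r. \<exists>n. p ^ n * r \<in> V)"
proof -
  obtain A v where Av: "valp A v" "\<forall>r. \<not> transc A r" using exists_alg by blast
  obtain V where V: "V \<in> Fam A v" "\<forall>X\<in>Fam A v. V \<subseteq> X \<longrightarrow> X = V" using exists_V[OF Av(1)] by blast
  have "is_subring V" using Vsub[OF Av(1) V] .
  moreover have "D \<subseteq> V" using DA[OF Av(1)] AV[OF Av(1) V] by blast
  moreover have "q \<notin> V" using q_notin_V[OF Av(1) V] .
  moreover have "\<forall>r. \<exists>n. p ^ n * r \<in> V" using alg_elem[OF Av(1) V] Av(2) by blast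
  ultimately show ?thesis by blast
qed

end



lemma final_from_S0:
  fixes D :: "'a::comm_ring_1 set" and p q :: 'a
  assumes V: "is_subring V" "D \<subseteq> V" "q \<notin> V" "\<forall>r. \<exists>n. p ^ n * r \<in> V"
    and pD: "p \<in> D" and pq: "p * q = 1"
  shows "\<exists>W. maximal_subring W \<and> integrally_closed_in W \<and> D \<subseteq> W \<and> conches W q"
proof -
  let ?G = "{S. is_subring S \<and> V \<subseteq> S \<and> q \<notin> S}"
  have G0: "V \<in> ?G" using V by blast
  have Gch: "\<Union>C \<in> ?G" if C: "C \<subseteq> ?G" "chain\<^sub>\<subseteq> C" "C \<noteq> {}" for C
  proof -
    have "is_subring (\<Union>C)" using subring_chain[OF C(3) C(2)] C(1) by blast
    moreover have "V \<subseteq> \<Union>C" using C by blast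
    moreover have "q \<notin> \<Union>C" using C(1) by blast
    ultimately show ?thesis by blast
  qed
  obtain W where W: "W \<in> ?G" "V \<subseteq> W" and Wmax: "\<forall>X\<in>?G. W \<subseteq> X \<longrightarrow> X = W"
    using zorn_above[OF G0 Gch] by blast
  have Ws: "is_subring W" and qW: "q \<notin> W" using W by auto
  have pW: "p \<in> W" using pD V(2) W(2) by blast
  have big: "S = UNIV" if S: "is_subring S" "W \<subseteq> S" "q \<in> S" for S
  proof -
    have "r \<in> S" for r
    proof -
      obtain n where n: "p ^ n * r \<in> V" using V(4) by blast
      then have "p ^ n * r \<in> S" using W(2) S(2) by blast
      moreover have "q ^ n \<in> S" using subring_pow[OF S(1) S(3)] .
      ultimately have "q ^ n * (p ^ n * r) \<in> S" using subring_mult[OF S(1)] by blast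
      moreover have "q ^ n * (p ^ n * r) = r"
      proof -
        have "q ^ n * (p ^ n * r) = (p * q) ^ n * r" by (simp add: power_mult_distrib mult_ac)
        then show ?thesis using pq by simp
      qed
      ultimately show ?thesis by simp
    qed
    then show ?thesis by blast
  qed
  have maxW: "S = W" if S: "is_subring S" "W \<subseteq> S" "q \<notin> S" for S
  proof -
    have "S \<in> ?G" using S W(2) by blast
    then show ?thesis using Wmax S(2) by blast
  qed
  have ms: "maximal_subring W" unfolding maximal_subring_def
  proof (intro conjI allI impI)
    show "is_subring W" using Ws .
    show "W \<noteq> UNIV" using qW by blast
  next
    fix S assume S: "is_subring S \<and> W \<subseteq> S \<and> S \<noteq> UNIV"
    then have "q \<notin> S" using big by blast
    then show "S = W" using maxW S by blast
  qed
  have ic: "integrally_closed_in W" unfolding integrally_closed_in_def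
  proof (intro allI impI)
    fix x assume "integral_over W x"
    then obtain K c where c: "\<forall>i<K. c i \<in> W" and rel: "x ^ K + (\<Sum>i<K. c i * x ^ i) = 0"
      unfolding integral_over_def by blast
    have K: "K \<ge> 1"
    proof (rule ccontr)
      assume "\<not> K \<ge> 1" then have "K = 0" by simp
      then show False using rel by simp
    qed
    show "x \<in> W"
    proof (rule ccontr)
      assume xW: "x \<notin> W"
      have As: "is_subring (adjoin W x)" using adjoin_subring[OF Ws] .
      have WA: "W \<subseteq> adjoin W x" using adjoin_sub[OF Ws] .
      have qA: "q \<in> adjoin W x"
      proof (rule ccontr)
        assume "q \<notin> adjoin W x"
        then have "adjoin W x = W" using maxW[OF As WA] by blast
        then show False using adjoin_gen[OF Ws] xW by blast
      qed
      have rep: "\<exists>s. (\<forall>l<K. s l \<in> W) \<and> q * x ^ j = (\<Sum>l<K. s l * x ^ l)" for j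
      proof -
        have "q * x ^ j \<in> adjoin W x" using subring_mult[OF As qA subring_pow[OF As adjoin_gen[OF Ws]]] .
        then show ?thesis using monic_reduce[OF Ws K c rel] by blast
      qed
      define s where "s j = (SOME s. (\<forall>l<K. s l \<in> W) \<and> q * x ^ j = (\<Sum>l<K. s l * x ^ l))" for j
      have s: "(\<forall>l<K. s j l \<in> W) \<and> q * x ^ j = (\<Sum>l<K. s j l * x ^ l)" for j
        unfolding s_def using someI_ex[OF rep[of j]] .
      define E where "E j l = p * s j l" for j l
      let ?I = "\<lambda>n::nat. {p * w | w. w \<in> W}"
      have "(1::'a) ^ K \<in> ?I K"
      proof (rule GL[where m = "\<lambda>l. x ^ l" and E = E])
        show "1 \<le> K" using K .
        show "x ^ 0 = 1" by simp
        show "\<forall>j<K. 1 * x ^ j = (\<Sum>l<K. E j l * x ^ l)"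
        proof (intro allI impI)
          fix j
          have "x ^ j = p * (q * x ^ j)" using pq by (simp add: mult.assoc[symmetric])
          also have "\<dots> = (\<Sum>l<K. E j l * x ^ l)" using s[of j] unfolding E_def
            by (simp add: sum_distrib_left mult.assoc)
          finally show "1 * x ^ j = (\<Sum>l<K. E j l * x ^ l)" by simp
        qed
        show "\<forall>j<K. \<forall>l<K. E j l \<in> ?I 1" using s unfolding E_def by blast
        show "\<And>n. 0 \<in> ?I n" using subring_0[OF Ws] by (intro CollectI exI[of _ 0]) simp
        show "\<And>n a b. a \<in> ?I n \<Longrightarrow> b \<in> ?I n \<Longrightarrow> a + b \<in> ?I n"
        proof -
          fix n a b assume "a \<in> ?I n" "b \<in> ?I n"
          then obtain w1 w2 where "a = p * w1" "w1 \<in> W" "b = p * w2" "w2 \<in> W" by blast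
          then show "a + b \<in> ?I n" using subring_add[OF Ws] by (intro CollectI exI[of _ "w1 + w2"]) (simp add: distrib_left)
        qed
        show "\<And>n a. a \<in> ?I n \<Longrightarrow> - a \<in> ?I n"
        proof -
          fix n a assume "a \<in> ?I n"
          then obtain w1 where "a = p * w1" "w1 \<in> W" by blast
          then show "- a \<in> ?I n" using subring_neg[OF Ws] by (intro CollectI exI[of _ "- w1"]) simp
        qed
        show "\<And>n a. a \<in> ?I n \<Longrightarrow> 1 * a \<in> ?I (Suc n)" by simp
        show "\<And>n n' a b. a \<in> ?I n \<Longrightarrow> b \<in> ?I n' \<Longrightarrow> a * b \<in> ?I (n + n')"
        proof -
          fix n n' a b assume "a \<in> ?I n" "b \<in> ?I n'"
          then obtain w1 w2 where "a = p * w1" "w1 \<in> W" "b = p * w2" "w2 \<in> W" by blast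
          then show "a * b \<in> ?I (n + n')" using subring_mult[OF Ws] pW
            by (intro CollectI exI[of _ "w1 * (p * w2)"]) (simp_all add: mult_ac)
        qed
      qed
      then obtain w where w: "1 = p * w" "w \<in> W" by auto
      have "q = w" using w pq by (metis mult.left_commute mult_1_right)
      then show False using qW w(2) by simp
    qed
  qed
  have "conches W q" unfolding conches_def
  proof (intro exI[of _ p] conjI allI impI)
    show "q * p = 1" using pq by (simp add: mult.commute)
    show "is_subring W" using Ws .
    show "p \<in> W" using pW .
    show "q \<notin> W" using qW .
  next
    fix S assume "is_subring S \<and> W \<subseteq> S \<and> p \<in> S \<and> q \<notin> S"
    then show "S = W" using maxW by blast
  qed
  moreover have "D \<subseteq> W" using V(2) W(2) by blast
  ultimately show ?thesis using ms ic by blast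
qed

theorem theorem2p1:
  fixes D :: "'a::comm_ring_1 set" and p q :: 'a
  assumes "integral_domain_subring D"
    and "prime_in D p"
    and "\<forall>x. (\<forall>n::nat\<ge>1. \<exists>d\<in>D. x = p ^ n * d) \<longrightarrow> x = 0"
    and "p * q = 1"
  shows "\<exists>W. maximal_subring W \<and> integrally_closed_in W \<and> D \<subseteq> W \<and> conches W q"
proof -
  interpret c0: ctx0 D p q
    using assms unfolding integral_domain_subring_def prime_in_def by unfold_locales auto
  obtain P where P: "ideal_R P" "\<forall>a b. a * b \<in> P \<longrightarrow> a \<in> P \<or> b \<in> P" "P \<inter> D = {0}"
    using c0.exists_prime_ideal by blast
  interpret c: ctx D p q P using P by unfold_locales auto
  obtain V where "is_subring V" "D \<subseteq> V" "q \<notin> V" "\<forall>r. \<exists>n. p ^ n * r \<in> V"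
    using c.exists_S0 by blast
  then show ?thesis using final_from_S0 c0.pD assms(4) by blast
qed


end
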